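(* Let $a<b$ be real numbers, $n\in\mathbb{N}$, and let $F_1,F_2\colon[a,b]\to\mathbb{R}$ be functions of bounded variation with $F_1(a)=F_2(a)$. For a function $G\colon[a,b]\to\mathbb{R}$ of bounded variation define $J_0^G=G$ and $J_k^G(x)=\int_a^x J_{k-1}^G(s)\,ds$ for $x\in[a,b]$, $k\ge 1$, so that $J_k^G(x)=\int_a^x\int_a^{x_{k-1}}\cdots\int_a^{x_1}G(t)\,dt\,dx_1\cdots dx_{k-1}$. Then $$\int_a^b f(x)\,dF_1(x)\le\int_a^b f(x)\,dF_2(x)\quad\text{for all continuous $n$-convex functions } f\colon[a,b]\to\mathbb{R}$$ holds if and only if the following conditions are satisfied: (i) $F_1(b)=F_2(b)$; (ii) $\int_a^b F_1(x)\,dx=\int_a^b F_2(x)\,dx$; (iii) $J_k^{F_1}(b)=J_k^{F_2}(b)$ for $k=2,\dots,n$; (iv) $(-1)^{n+1}J_n^{F_1}(x)\le(-1)^{n+1}J_n^{F_2}(x)$ for every $x\in(a,b)$.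
   Context: A function $f$ on an interval is called $n$-convex ($n\ge1$) in the sense of Popoviciu, i.e. all its divided differences of order $n+1$ are nonnegative; equivalently, $f^{(n-1)}$ exists and is convex (so $1$-convex means convex), and for $f$ continuous on $[a,b]$ and $(n+1)$-times differentiable on $(a,b)$ this is equivalent to $f^{(n+1)}\ge0$ on $(a,b)$. Integrals $\int f\,dF$ are Riemann–Stieltjes integrals. *)

theory Defs
  imports "HOL-Analysis.Analysis"
begin

definition bounded_variation_on :: "(real \<Rightarrow> real) \<Rightarrow> real \<Rightarrow> real \<Rightarrow> bool" where
  "bounded_variation_on F a b \<longleftrightarrow>
     (\<exists>M. \<forall>(m::nat) (x::nat \<Rightarrow> real).
        x 0 = a \<and> x m = b \<and> (\<forall>i<m. x i \<le> x (Suc i)) \<longrightarrow>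
        (\<Sum>i<m. \<bar>F (x (Suc i)) - F (x i)\<bar>) \<le> M)"

definition has_RS_integral :: "(real \<Rightarrow> real) \<Rightarrow> (real \<Rightarrow> real) \<Rightarrow> real \<Rightarrow> real \<Rightarrow> real \<Rightarrow> bool" where
  "has_RS_integral f F a b I \<longleftrightarrow>
     (\<forall>\<epsilon>>0. \<exists>\<delta>>0. \<forall>(m::nat) (x::nat \<Rightarrow> real) (t::nat \<Rightarrow> real).
        x 0 = a \<and> x m = b \<and>
        (\<forall>i<m. x i \<le> t i \<and> t i \<le> x (Suc i) \<and> x (Suc i) - x i < \<delta>) \<longrightarrow>
        \<bar>(\<Sum>i<m. f (t i) * (F (x (Suc i)) - F (x i))) - I\<bar> < \<epsilon>)"

definition RS_integral :: "(real \<Rightarrow> real) \<Rightarrow> (real \<Rightarrow> real) \<Rightarrow> real \<Rightarrow> real \<Rightarrow> real" where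
  "RS_integral f F a b = (THE I. has_RS_integral f F a b I)"

definition divided_diff :: "nat \<Rightarrow> (nat \<Rightarrow> real) \<Rightarrow> (real \<Rightarrow> real) \<Rightarrow> real" where
  "divided_diff k x f = (\<Sum>i\<le>k. f (x i) / (\<Prod>j\<in>{..k} - {i}. (x i - x j)))"

definition n_convex_on :: "nat \<Rightarrow> real set \<Rightarrow> (real \<Rightarrow> real) \<Rightarrow> bool" where
  "n_convex_on n S f \<longleftrightarrow>
     (\<forall>x::nat \<Rightarrow> real. (\<forall>i\<le>n+1. x i \<in> S) \<and> inj_on x {..n+1} \<longrightarrow>
        divided_diff (n+1) x f \<ge> 0)"

fun J :: "nat \<Rightarrow> (real \<Rightarrow> real) \<Rightarrow> real \<Rightarrow> real \<Rightarrow> real" where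
  "J 0 G a x = G x"
| "J (Suc k) G a x = integral {a..x} (J k G a)"

end

theory Submission
  imports Defs
begin


definition RSsum :: "(real \<Rightarrow> real) \<Rightarrow> (real \<Rightarrow> real) \<Rightarrow> nat \<Rightarrow> (nat \<Rightarrow> real) \<Rightarrow> (nat \<Rightarrow> real) \<Rightarrow> real" where
  "RSsum f F m x t = (\<Sum>i<m. f (t i) * (F (x (Suc i)) - F (x i)))"

definition tp :: "real \<Rightarrow> real \<Rightarrow> real \<Rightarrow> nat \<Rightarrow> (nat \<Rightarrow> real) \<Rightarrow> (nat \<Rightarrow> real) \<Rightarrow> bool" where
  "tp a b d m x t \<longleftrightarrow> x 0 = a \<and> x m = b \<and>
        (\<forall>i<m. x i \<le> t i \<and> t i \<le> x (Suc i) \<and> x (Suc i) - x i < d)"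

lemma has_RS_iff: "has_RS_integral f F a b I \<longleftrightarrow>
   (\<forall>e>0. \<exists>d>0. \<forall>m x t. tp a b d m x t \<longrightarrow> \<bar>RSsum f F m x t - I\<bar> < e)"
  unfolding has_RS_integral_def tp_def RSsum_def by auto

lemma chain_mono:
  assumes "\<forall>i<m. x i \<le> x (Suc i)" "i \<le> j" "j \<le> m"
  shows "x i \<le> (x j::real)"
  using assms(2,3)
proof (induction j)
  case 0 then show ?case by simp
next
  case (Suc j)
  show ?case
  proof (cases "i = Suc j")
    case True then show ?thesis by simp
  next
    case False
    then have "x i \<le> x j" using Suc by simp
    also have "x j \<le> x (Suc j)" using assms(1) Suc by simp
    finally show ?thesis .
  qed
qed

lemma tp_in:
  assumes "tp a b d m x t"
  shows "\<And>i. i \<le> m \<Longrightarrow> x i \<in> {a..b}" "\<And>i. i < m \<Longrightarrow> t i \<in> {a..b}"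
    "\<And>i. i < m \<Longrightarrow> x i \<le> x (Suc i)"
proof -
  have ch: "\<forall>i<m. x i \<le> x (Suc i)" using assms unfolding tp_def by force
  show xi: "\<And>i. i \<le> m \<Longrightarrow> x i \<in> {a..b}"
    using chain_mono[OF ch, of 0] chain_mono[OF ch, of _ m] assms unfolding tp_def by auto
  show "\<And>i. i < m \<Longrightarrow> t i \<in> {a..b}"
  proof -
    fix i assume "i < m"
    then have "x i \<le> t i" "t i \<le> x (Suc i)" "x i \<in> {a..b}" "x (Suc i) \<in> {a..b}"
      using assms xi unfolding tp_def by auto
    then show "t i \<in> {a..b}" by auto
  qed
  show "\<And>i. i < m \<Longrightarrow> x i \<le> x (Suc i)" using ch by auto
qed

lemma tp_exists:
  assumes "a \<le> b" "d > 0"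
  shows "\<exists>m x t. tp a b d m x t"
proof -
  obtain m :: nat where m: "(b - a) / d < m" using reals_Archimedean2 by blast
  have mpos: "m > 0" using m assms
    by (metis divide_nonneg_pos diff_ge_0_iff_ge of_nat_0_less_iff order_le_less_trans)
  define x where "x = (\<lambda>i::nat. a + real i * (b - a) / m)"
  have "(b - a) / m < d"
    using m mpos assms by (simp add: field_simps)
  moreover have "x (Suc i) - x i = (b - a) / m" for i
    unfolding x_def by (simp add: add_divide_distrib diff_divide_distrib algebra_simps)
  moreover have "x i \<le> x (Suc i)" for i
    unfolding x_def using assms mpos by (simp add: field_simps)
  ultimately have "tp a b d m x x"
    unfolding tp_def using mpos by (auto simp: x_def)
  then show ?thesis by blast
qed

lemma has_RS_unique:
  assumes "a \<le> b" "has_RS_integral f F a b I" "has_RS_integral f F a b I2"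
  shows "I = I2"
proof (rule ccontr)
  assume "I \<noteq> I2"
  then have e: "\<bar>I - I2\<bar> / 2 > 0" by simp
  obtain d1 where d1: "d1 > 0" "\<forall>m x t. tp a b d1 m x t \<longrightarrow> \<bar>RSsum f F m x t - I\<bar> < \<bar>I - I2\<bar> / 2"
    using assms(2) e unfolding has_RS_iff by blast
  obtain d2 where d2: "d2 > 0" "\<forall>m x t. tp a b d2 m x t \<longrightarrow> \<bar>RSsum f F m x t - I2\<bar> < \<bar>I - I2\<bar> / 2"
    using assms(3) e unfolding has_RS_iff by blast
  obtain m x t where p: "tp a b (min d1 d2) m x t" using tp_exists[OF assms(1)] d1 d2 by force
  have "tp a b d1 m x t" "tp a b d2 m x t" using p unfolding tp_def by auto
  then have "\<bar>RSsum f F m x t - I\<bar> < \<bar>I - I2\<bar> / 2" "\<bar>RSsum f F m x t - I2\<bar> < \<bar>I - I2\<bar> / 2"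
    using d1 d2 by auto
  then show False by (simp add: abs_if split: if_split_asm)
qed

lemma RS_integral_eq:
  assumes "a \<le> b" "has_RS_integral f F a b I"
  shows "RS_integral f F a b = I"
  unfolding RS_integral_def using has_RS_unique[OF assms(1)] assms(2) by blast

lemma has_RS_diff:
  assumes "has_RS_integral f F a b I" "has_RS_integral f G a b I2"
  shows "has_RS_integral f (\<lambda>x. F x - G x) a b (I - I2)"
  unfolding has_RS_iff
proof (intro allI impI)
  fix e :: real assume e: "e > 0"
  obtain d1 where d1: "d1 > 0" "\<forall>m x t. tp a b d1 m x t \<longrightarrow> \<bar>RSsum f F m x t - I\<bar> < e/2"
    using assms(1) e unfolding has_RS_iff by (meson half_gt_zero)
  obtain d2 where d2: "d2 > 0" "\<forall>m x t. tp a b d2 m x t \<longrightarrow> \<bar>RSsum f G m x t - I2\<bar> < e/2"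
    using assms(2) e unfolding has_RS_iff by (meson half_gt_zero)
  show "\<exists>d>0. \<forall>m x t. tp a b d m x t \<longrightarrow> \<bar>RSsum f (\<lambda>x. F x - G x) m x t - (I - I2)\<bar> < e"
  proof (intro exI[of _ "min d1 d2"] conjI allI impI)
    fix m x t assume p: "tp a b (min d1 d2) m x t"
    have "tp a b d1 m x t" "tp a b d2 m x t" using p unfolding tp_def by auto
    then have "\<bar>RSsum f F m x t - I\<bar> < e/2" "\<bar>RSsum f G m x t - I2\<bar> < e/2" using d1 d2 by auto
    moreover have "RSsum f (\<lambda>x. F x - G x) m x t = RSsum f F m x t - RSsum f G m x t"
      unfolding RSsum_def by (simp add: sum_subtractf[symmetric] algebra_simps)
    ultimately show "\<bar>RSsum f (\<lambda>x. F x - G x) m x t - (I - I2)\<bar> < e" by linarith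
  qed (use d1 d2 in auto)
qed

lemma has_RS_cmul:
  assumes "has_RS_integral f F a b I"
  shows "has_RS_integral f (\<lambda>x. c * F x) a b (c * I)"
  unfolding has_RS_iff
proof (intro allI impI)
  fix e :: real assume e: "e > 0"
  have e': "e / (\<bar>c\<bar> + 1) > 0" using e by simp
  obtain d where d: "d > 0" "\<forall>m x t. tp a b d m x t \<longrightarrow> \<bar>RSsum f F m x t - I\<bar> < e / (\<bar>c\<bar> + 1)"
    using assms e' unfolding has_RS_iff by blast
  show "\<exists>d>0. \<forall>m x t. tp a b d m x t \<longrightarrow> \<bar>RSsum f (\<lambda>x. c * F x) m x t - c * I\<bar> < e"
  proof (intro exI[of _ d] conjI allI impI)
    fix m x t assume p: "tp a b d m x t"
    have eq: "RSsum f (\<lambda>x. c * F x) m x t - c * I = c * (RSsum f F m x t - I)"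
      unfolding RSsum_def by (simp add: sum_distrib_left algebra_simps)
    have "\<bar>c * (RSsum f F m x t - I)\<bar> \<le> (\<bar>c\<bar> + 1) * \<bar>RSsum f F m x t - I\<bar>"
      by (simp add: abs_mult mult_right_mono)
    also have "\<dots> < (\<bar>c\<bar> + 1) * (e / (\<bar>c\<bar> + 1))"
      using d p by (intro mult_strict_left_mono) auto
    also have "\<dots> = e" by simp
    finally show "\<bar>RSsum f (\<lambda>x. c * F x) m x t - c * I\<bar> < e" using eq by simp
  qed (use d in auto)
qed

lemma has_RS_cong:
  assumes "has_RS_integral f F a b I" "\<And>x. x \<in> {a..b} \<Longrightarrow> f x = g x" "\<And>x. x \<in> {a..b} \<Longrightarrow> F x = G x"
  shows "has_RS_integral g G a b I"
  unfolding has_RS_iff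
proof (intro allI impI)
  fix e :: real assume e: "e > 0"
  obtain d where d: "d > 0" "\<forall>m x t. tp a b d m x t \<longrightarrow> \<bar>RSsum f F m x t - I\<bar> < e"
    using assms e unfolding has_RS_iff by blast
  show "\<exists>d>0. \<forall>m x t. tp a b d m x t \<longrightarrow> \<bar>RSsum g G m x t - I\<bar> < e"
  proof (intro exI[of _ d] conjI allI impI)
    fix m x t assume p: "tp a b d m x t"
    have "RSsum g G m x t = RSsum f F m x t"
      unfolding RSsum_def using tp_in[OF p] assms(2,3)
      by (intro sum.cong) auto
    then show "\<bar>RSsum g G m x t - I\<bar> < e" using d p by simp
  qed (use d in auto)
qed



definition chain :: "real \<Rightarrow> real \<Rightarrow> nat \<Rightarrow> (nat \<Rightarrow> real) \<Rightarrow> bool" where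
  "chain a b m x \<longleftrightarrow> x 0 = a \<and> x m = b \<and> (\<forall>i<m. x i \<le> x (Suc i))"

definition vsum :: "(real \<Rightarrow> real) \<Rightarrow> nat \<Rightarrow> (nat \<Rightarrow> real) \<Rightarrow> real" where
  "vsum F m x = (\<Sum>i<m. \<bar>F (x (Suc i)) - F (x i)\<bar>)"

lemma bv_iff: "bounded_variation_on F a b \<longleftrightarrow> (\<exists>M. \<forall>m x. chain a b m x \<longrightarrow> vsum F m x \<le> M)"
  unfolding bounded_variation_on_def chain_def vsum_def by auto

lemma vsum_nonneg: "vsum F m x \<ge> 0" unfolding vsum_def by (auto intro: sum_nonneg)


lemma tp_chain: "tp a b d m x t \<Longrightarrow> chain a b m x"
  using tp_in(3)[of a b d m x t] unfolding tp_def chain_def by auto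

lemma chain_in: "chain a b m x \<Longrightarrow> i \<le> m \<Longrightarrow> x i \<in> {a..b}"
  using chain_mono[of m x 0 i] chain_mono[of m x i m] unfolding chain_def by auto

lemma chain_append:
  assumes "chain a c m x" "c \<le> z"
  shows "chain a z (Suc m) (\<lambda>i. if i \<le> m then x i else z)"
    "vsum F (Suc m) (\<lambda>i. if i \<le> m then x i else z) = vsum F m x + \<bar>F z - F c\<bar>"
proof -
  show "chain a z (Suc m) (\<lambda>i. if i \<le> m then x i else z)"
    unfolding chain_def
  proof (intro conjI allI impI)
    fix i assume "i < Suc m"
    then consider "i < m" | "i = m" by linarith
    then show "(if i \<le> m then x i else z) \<le> (if Suc i \<le> m then x (Suc i) else z)"
      by cases (use assms in \<open>auto simp: chain_def\<close>)
  qed (use assms in \<open>auto simp: chain_def\<close>)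
  have "vsum F (Suc m) (\<lambda>i. if i \<le> m then x i else z) =
        (\<Sum>i<m. \<bar>F (x (Suc i)) - F (x i)\<bar>) + \<bar>F z - F (x m)\<bar>"
    unfolding vsum_def by (simp add: lessThan_Suc)
  then show "vsum F (Suc m) (\<lambda>i. if i \<le> m then x i else z) = vsum F m x + \<bar>F z - F c\<bar>"
    using assms unfolding chain_def vsum_def by simp
qed

lemma chain_triv: "a \<le> c \<Longrightarrow> chain a c 1 (\<lambda>i. if i = 0 then a else c)"
  unfolding chain_def by auto

lemma bv_bound:
  assumes "bounded_variation_on F a b"
  obtains M where "M \<ge> 0" "\<And>m x. chain a b m x \<Longrightarrow> vsum F m x \<le> M"
proof -
  obtain M where M: "\<And>m x. chain a b m x \<Longrightarrow> vsum F m x \<le> M" using assms unfolding bv_iff by blast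
  have "\<And>m x. chain a b m x \<Longrightarrow> vsum F m x \<le> max M 0" using M by (meson max.coboundedI1)
  then show ?thesis using that[of "max M 0"] by auto
qed

lemma bv_subinterval:
  assumes "bounded_variation_on F a b" "a \<le> c" "c \<le> b" "chain a c m x"
  shows "vsum F m x \<le> (SOME M. M \<ge> 0 \<and> (\<forall>m x. chain a b m x \<longrightarrow> vsum F m x \<le> M))"
proof -
  obtain M where M: "M \<ge> 0" "\<And>m x. chain a b m x \<Longrightarrow> vsum F m x \<le> M" using bv_bound[OF assms(1)] by blast
  define M' where "M' = (SOME M. M \<ge> 0 \<and> (\<forall>m x. chain a b m x \<longrightarrow> vsum F m x \<le> M))"
  have M': "M' \<ge> 0" "\<And>m x. chain a b m x \<Longrightarrow> vsum F m x \<le> M'"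
    using someI[of "\<lambda>M. M \<ge> 0 \<and> (\<forall>m x. chain a b m x \<longrightarrow> vsum F m x \<le> M)" M] M unfolding M'_def by auto
  have "vsum F m x \<le> vsum F m x + \<bar>F b - F c\<bar>" by simp
  also have "\<dots> \<le> M'" using chain_append(2)[OF assms(4) assms(3), of F] chain_append(1)[OF assms(4) assms(3)] M'(2) by metis
  finally show ?thesis unfolding M'_def .
qed

definition var :: "(real \<Rightarrow> real) \<Rightarrow> real \<Rightarrow> real \<Rightarrow> real" where
  "var F a c = Sup {vsum F m x | m x. chain a c m x}"

lemma var_props:
  assumes "bounded_variation_on F a b" "a \<le> c" "c \<le> b"
  shows "bdd_above {vsum F m x | m x. chain a c m x}" "{vsum F m x | m x. chain a c m x} \<noteq> {}"
proof -
  show "bdd_above {vsum F m x | m x. chain a c m x}"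
    using bv_subinterval[OF assms] unfolding bdd_above_def by blast
  show "{vsum F m x | m x. chain a c m x} \<noteq> {}" using chain_triv[OF assms(2)] by blast
qed

lemma var_ge:
  assumes "bounded_variation_on F a b" "a \<le> c" "c \<le> b" "chain a c m x"
  shows "vsum F m x \<le> var F a c"
  unfolding var_def using var_props[OF assms(1-3)] assms(4) by (intro cSup_upper) auto

lemma var_step:
  assumes "bounded_variation_on F a b" "a \<le> c" "c \<le> z" "z \<le> b"
  shows "var F a c + \<bar>F z - F c\<bar> \<le> var F a z"
proof -
  have "var F a c \<le> var F a z - \<bar>F z - F c\<bar>"
    unfolding var_def[of F a c]
  proof (rule cSup_least)
    show "{vsum F m x | m x. chain a c m x} \<noteq> {}" using var_props assms by auto
    fix s assume "s \<in> {vsum F m x | m x. chain a c m x}"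
    then obtain m x where s: "s = vsum F m x" "chain a c m x" by blast
    have "vsum F m x + \<bar>F z - F c\<bar> \<le> var F a z"
      using chain_append(2)[OF s(2) assms(3), of F] chain_append(1)[OF s(2) assms(3)] var_ge[OF assms(1), of z "Suc m"] assms by force
    then show "s \<le> var F a z - \<bar>F z - F c\<bar>" using s by simp
  qed
  then show ?thesis by simp
qed

lemma bv_decomp:
  assumes "bounded_variation_on F a b"
  obtains P Q where "mono_on {a..b} P" "mono_on {a..b} Q" "\<And>x. x \<in> {a..b} \<Longrightarrow> F x = P x - Q x"
proof -
  define P where "P = var F a"
  define Q where "Q = (\<lambda>x. var F a x - F x)"
  have "mono_on {a..b} P" unfolding P_def
    by (intro mono_onI) (use var_step[OF assms] in force)
  moreover have "mono_on {a..b} Q" unfolding Q_def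
  proof (intro mono_onI)
    fix r s assume "r \<in> {a..b}" "s \<in> {a..b}" "r \<le> s"
    then have "var F a r + \<bar>F s - F r\<bar> \<le> var F a s" using var_step[OF assms] by auto
    then show "var F a r - F r \<le> var F a s - F s" by linarith
  qed
  ultimately show ?thesis using that[of P Q] unfolding P_def Q_def by auto
qed

lemma bv_bounded:
  assumes "bounded_variation_on F a b"
  obtains M where "\<And>x. x \<in> {a..b} \<Longrightarrow> \<bar>F x\<bar> \<le> M"
proof -
  obtain M where M: "M \<ge> 0" "\<And>m x. chain a b m x \<Longrightarrow> vsum F m x \<le> M" using bv_bound[OF assms(1)] by blast
  have "\<bar>F y\<bar> \<le> \<bar>F a\<bar> + M" if y: "y \<in> {a..b}" for y
  proof -
    have c: "chain a y 1 (\<lambda>i. if i = 0 then a else y)" using chain_triv y by auto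
    have "\<bar>F y - F a\<bar> \<le> vsum F 1 (\<lambda>i. if i = 0 then a else y)" unfolding vsum_def by simp
    also have "\<dots> \<le> vsum F 1 (\<lambda>i. if i = 0 then a else y) + \<bar>F b - F y\<bar>" by simp
    also have "\<dots> \<le> M" using chain_append(2)[OF c, of b F] chain_append(1)[OF c, of b] M(2) y by force
    finally show ?thesis by linarith
  qed
  then show ?thesis using that by blast
qed

lemma bv_integrable:
  assumes "bounded_variation_on F a b" "a \<le> c" "d \<le> b"
  shows "F integrable_on {c..d}"
proof -
  obtain P Q where PQ: "mono_on {a..b} P" "mono_on {a..b} Q" "\<And>x. x \<in> {a..b} \<Longrightarrow> F x = P x - Q x"
    using bv_decomp[OF assms(1)] by blast
  have "P integrable_on {a..b}" "Q integrable_on {a..b}" using PQ integrable_on_mono_on by auto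
  then have "(\<lambda>x. P x - Q x) integrable_on {a..b}" by (rule integrable_diff)
  then have "F integrable_on {a..b}"
    by (rule integrable_eq) (use PQ in auto)
  then show ?thesis
    by (rule integrable_on_subinterval) (use assms in auto)
qed



lemma chain_mono2: "chain a b m x \<Longrightarrow> i \<le> j \<Longrightarrow> j \<le> m \<Longrightarrow> x i \<le> x j"
  using chain_mono[of m x i j] unfolding chain_def by auto

lemma bv_mono:
  assumes "mono_on {a..b} F" "a \<le> b"
  shows "bounded_variation_on F a b"
  unfolding bv_iff
proof (intro exI allI impI)
  fix m x assume c: "chain a b m x"
  have "vsum F m x = (\<Sum>i<m. F (x (Suc i)) - F (x i))"
    unfolding vsum_def
  proof (intro sum.cong refl)
    fix i assume "i \<in> {..<m}"
    then have "x i \<in> {a..b}" "x (Suc i) \<in> {a..b}" "x i \<le> x (Suc i)"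
      using chain_in[OF c] c unfolding chain_def by auto
    then show "\<bar>F (x (Suc i)) - F (x i)\<bar> = F (x (Suc i)) - F (x i)"
      using assms(1) by (auto simp: mono_on_def)
  qed
  also have "\<dots> = F b - F a" using c sum_lessThan_telescope[of "\<lambda>i. F (x i)" m] by (simp add: chain_def)
  finally show "vsum F m x \<le> F b - F a" by simp
qed

lemma bv_diff:
  assumes "bounded_variation_on F a b" "bounded_variation_on G a b"
  shows "bounded_variation_on (\<lambda>x. F x - G x) a b"
proof -
  obtain M1 where M1: "\<And>m x. chain a b m x \<Longrightarrow> vsum F m x \<le> M1" using assms(1) unfolding bv_iff by blast
  obtain M2 where M2: "\<And>m x. chain a b m x \<Longrightarrow> vsum G m x \<le> M2" using assms(2) unfolding bv_iff by blast
  show ?thesis unfolding bv_iff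
  proof (intro exI allI impI)
    fix m x assume c: "chain a b m x"
    have "vsum (\<lambda>x. F x - G x) m x \<le> vsum F m x + vsum G m x"
      unfolding vsum_def sum.distrib[symmetric] by (intro sum_mono) linarith
    also have "\<dots> \<le> M1 + M2" using M1[OF c] M2[OF c] by simp
    finally show "vsum (\<lambda>x. F x - G x) m x \<le> M1 + M2" .
  qed
qed

lemma bv_cmul:
  assumes "bounded_variation_on F a b"
  shows "bounded_variation_on (\<lambda>x. c * F x) a b"
proof -
  obtain M1 where M1: "\<And>m x. chain a b m x \<Longrightarrow> vsum F m x \<le> M1" using assms(1) unfolding bv_iff by blast
  show ?thesis unfolding bv_iff
  proof (intro exI allI impI)
    fix m x assume c: "chain a b m x"
    have "vsum (\<lambda>x. c * F x) m x = \<bar>c\<bar> * vsum F m x"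
      unfolding vsum_def sum_distrib_left by (intro sum.cong) (auto simp: abs_mult right_diff_distrib[symmetric])
    also have "\<dots> \<le> \<bar>c\<bar> * M1" using M1[OF c] by (simp add: mult_left_mono)
    finally show "vsum (\<lambda>x. c * F x) m x \<le> \<bar>c\<bar> * M1" .
  qed
qed

lemma bv_lipschitz:
  assumes "\<And>x y. x \<in> {a..b} \<Longrightarrow> y \<in> {a..b} \<Longrightarrow> \<bar>F y - F x\<bar> \<le> C * \<bar>y - x\<bar>"
  shows "bounded_variation_on F a b"
  unfolding bv_iff
proof (intro exI allI impI)
  fix m x assume c: "chain a b m x"
  have "vsum F m x \<le> (\<Sum>i<m. C * (x (Suc i) - x i))"
    unfolding vsum_def
  proof (intro sum_mono)
    fix i assume "i \<in> {..<m}"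
    then have "x i \<in> {a..b}" "x (Suc i) \<in> {a..b}" "x i \<le> x (Suc i)"
      using chain_in[OF c] c unfolding chain_def by auto
    then show "\<bar>F (x (Suc i)) - F (x i)\<bar> \<le> C * (x (Suc i) - x i)"
      using assms by fastforce
  qed
  also have "\<dots> = C * (b - a)" using c sum_lessThan_telescope[of x m]
    by (simp add: sum_distrib_left[symmetric] chain_def)
  finally show "vsum F m x \<le> C * (b - a)" .
qed

lemma RSsum_approx:
  assumes "tp a b d m x t" "\<And>y. y \<in> {a..b} \<Longrightarrow> \<bar>f y - g y\<bar> \<le> e"
    "\<And>m x. chain a b m x \<Longrightarrow> vsum F m x \<le> M"
  shows "\<bar>RSsum f F m x t - RSsum g F m x t\<bar> \<le> e * M"
proof -
  have "\<bar>RSsum f F m x t - RSsum g F m x t\<bar> = \<bar>\<Sum>i<m. (f (t i) - g (t i)) * (F (x (Suc i)) - F (x i))\<bar>"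
    unfolding RSsum_def sum_subtractf[symmetric] by (simp add: algebra_simps)
  also have "\<dots> \<le> (\<Sum>i<m. \<bar>(f (t i) - g (t i)) * (F (x (Suc i)) - F (x i))\<bar>)"
    by (rule sum_abs)
  also have "\<dots> \<le> (\<Sum>i<m. e * \<bar>F (x (Suc i)) - F (x i)\<bar>)"
  proof (intro sum_mono)
    fix i assume "i \<in> {..<m}"
    then have "\<bar>f (t i) - g (t i)\<bar> \<le> e" using tp_in(2)[OF assms(1)] assms(2) by auto
    then show "\<bar>(f (t i) - g (t i)) * (F (x (Suc i)) - F (x i))\<bar> \<le> e * \<bar>F (x (Suc i)) - F (x i)\<bar>"
      by (simp add: abs_mult mult_right_mono)
  qed
  also have "\<dots> = e * vsum F m x" unfolding vsum_def by (simp add: sum_distrib_left)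
  also have "\<dots> \<le> e * M"
  proof -
    have "e \<ge> 0" using assms(2)[of a] tp_in(1)[OF assms(1), of 0] by fastforce
    then show ?thesis using assms(3)[OF tp_chain[OF assms(1)]] by (simp add: mult_left_mono)
  qed
  finally show ?thesis .
qed

lemma RS_approx:
  assumes ab: "a \<le> b" and bv: "bounded_variation_on F a b"
    and g: "\<And>k. has_RS_integral (g k) F a b (I k)"
    and ap: "\<And>k y. y \<in> {a..b} \<Longrightarrow> \<bar>f y - g k y\<bar> \<le> e k"
    and e: "e \<longlonglongrightarrow> 0"
  shows "\<exists>L. has_RS_integral f F a b L \<and> I \<longlonglongrightarrow> L"
proof -
  obtain M where M: "M \<ge> 0" "\<And>m x. chain a b m x \<Longrightarrow> vsum F m x \<le> M" using bv_bound[OF bv] by blast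
  have e0: "e k \<ge> 0" for k using ap[of a k] ab by fastforce
  have gk: "\<bar>f y - g k y\<bar> \<le> e k" if "y \<in> {a..b}" for k y using ap that by auto
  have gjk: "\<bar>g j y - g k y\<bar> \<le> e j + e k" if "y \<in> {a..b}" for j k y
    using gk[OF that, of j] gk[OF that, of k] by linarith
  have IJ: "\<bar>I j - I k\<bar> \<le> (e j + e k) * M" for j k
  proof (rule field_le_epsilon)
    fix r :: real assume r: "r > 0"
    obtain d1 where d1: "d1 > 0" "\<forall>m x t. tp a b d1 m x t \<longrightarrow> \<bar>RSsum (g j) F m x t - I j\<bar> < r/2"
      using g[of j] r unfolding has_RS_iff by (meson half_gt_zero)
    obtain d2 where d2: "d2 > 0" "\<forall>m x t. tp a b d2 m x t \<longrightarrow> \<bar>RSsum (g k) F m x t - I k\<bar> < r/2"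
      using g[of k] r unfolding has_RS_iff by (meson half_gt_zero)
    obtain m x t where p: "tp a b (min d1 d2) m x t" using tp_exists[OF ab] d1 d2 by force
    have p1: "tp a b d1 m x t" and p2: "tp a b d2 m x t" using p unfolding tp_def by auto
    have "\<bar>RSsum (g j) F m x t - RSsum (g k) F m x t\<bar> \<le> (e j + e k) * M"
      by (rule RSsum_approx[OF p gjk M(2)]) auto
    moreover have "\<bar>RSsum (g j) F m x t - I j\<bar> < r/2" "\<bar>RSsum (g k) F m x t - I k\<bar> < r/2"
      using d1(2) p1 d2(2) p2 by auto
    ultimately show "\<bar>I j - I k\<bar> \<le> (e j + e k) * M + r"
      by (simp add: abs_if split: if_split_asm)
  qed
  have "Cauchy I"
  proof (rule metric_CauchyI)
    fix r :: real assume r: "r > 0"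
    have "eventually (\<lambda>k. e k < r / (2 * M + 1)) sequentially"
      using e r M(1) by (intro order_tendstoD) auto
    then obtain N where N: "\<And>k. k \<ge> N \<Longrightarrow> e k < r / (2 * M + 1)" by (auto simp: eventually_sequentially)
    show "\<exists>N. \<forall>j\<ge>N. \<forall>k\<ge>N. dist (I j) (I k) < r"
    proof (intro exI allI impI)
      fix j k assume "j \<ge> N" "k \<ge> N"
      then have "e j < r / (2 * M + 1)" "e k < r / (2 * M + 1)" using N by auto
      then have "e j + e k < 2 * (r / (2 * M + 1))" by linarith
      then have "(e j + e k) * M \<le> 2 * (r / (2 * M + 1)) * M" using M(1) by (intro mult_right_mono) auto
      also have "\<dots> < r" using r M(1) by (simp add: field_simps)
      finally show "dist (I j) (I k) < r" using IJ[of j k] by (simp add: dist_real_def)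
    qed
  qed
  then obtain L where L: "I \<longlonglongrightarrow> L" using Cauchy_convergent_iff convergent_def by blast
  have "has_RS_integral f F a b L"
    unfolding has_RS_iff
  proof (intro allI impI)
    fix r :: real assume r: "r > 0"
    have "eventually (\<lambda>k. e k * M < r / 3 \<and> \<bar>I k - L\<bar> < r / 3) sequentially"
    proof (intro eventually_conj)
      have "(\<lambda>k. e k * M) \<longlonglongrightarrow> 0 * M" using e by (intro tendsto_mult) auto
      then show "eventually (\<lambda>k. e k * M < r / 3) sequentially" using r by (intro order_tendstoD) auto
      have "(\<lambda>k. I k - L) \<longlonglongrightarrow> 0" using L by (simp add: LIM_zero)
      then have "(\<lambda>k. \<bar>I k - L\<bar>) \<longlonglongrightarrow> 0" using tendsto_rabs_zero by blast
      then show "eventually (\<lambda>k. \<bar>I k - L\<bar> < r / 3) sequentially" using r by (intro order_tendstoD) auto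
    qed
    then obtain k where k: "e k * M < r / 3" "\<bar>I k - L\<bar> < r / 3" using eventually_sequentially by force
    obtain d where d: "d > 0" "\<forall>m x t. tp a b d m x t \<longrightarrow> \<bar>RSsum (g k) F m x t - I k\<bar> < r/3"
      using g[of k] r unfolding has_RS_iff by (meson divide_pos_pos zero_less_numeral)
    show "\<exists>d>0. \<forall>m x t. tp a b d m x t \<longrightarrow> \<bar>RSsum f F m x t - L\<bar> < r"
    proof (intro exI[of _ d] conjI allI impI)
      fix m x t assume p: "tp a b d m x t"
      have "\<bar>RSsum f F m x t - RSsum (g k) F m x t\<bar> \<le> e k * M"
        by (rule RSsum_approx[OF p gk M(2)]) auto
      moreover have "\<bar>RSsum (g k) F m x t - I k\<bar> < r/3" using d p by auto
      ultimately show "\<bar>RSsum f F m x t - L\<bar> < r" using k by (simp add: abs_if split: if_split_asm)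
    qed (use d in auto)
  qed
  then show ?thesis using L by blast
qed



lemma mono_cont_int:
  fixes G h :: "real \<Rightarrow> real"
  assumes "mono_on {a..b} G" "continuous_on {a..b} h"
  shows "(\<lambda>s. G s * h s) integrable_on {a..b}"
proof -
  have 0: "sets borel \<subseteq> sets lebesgue" by force
  have 1: "G \<in> borel_measurable (restrict_space borel {a..b})" using borel_measurable_mono_on_fnc[OF assms(1)] .
  have 2: "sets (restrict_space borel {a..b}) \<subseteq> sets (restrict_space lebesgue {a..b})"
    by (rule mono_restrict_space[OF 0])
  have 3: "space (restrict_space borel {a..b}) = space (restrict_space lebesgue {a..b})"
    by (simp add: space_restrict_space)
  have Gm: "G \<in> borel_measurable (lebesgue_on {a..b})" using borel_measurable_subalgebra[OF 2 3 1] .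
  have "G ` {a..b} \<subseteq> {G a..G b}" using assms by (auto simp: mono_on_def)
  then have "bounded (G ` {a..b})" by (meson bounded_closed_interval bounded_subset)
  then have "(\<lambda>s. G s * h s) absolutely_integrable_on {a..b}"
    using absolutely_integrable_bounded_measurable_product_real[OF Gm _ _ absolutely_integrable_continuous_real[OF assms(2)]] by auto
  then show ?thesis using absolutely_integrable_on_def by blast
qed

lemma integral_chain_sum:
  fixes f :: "real \<Rightarrow> real"
  assumes "chain a b m x" "f integrable_on {a..b}"
  shows "integral {a..b} f = (\<Sum>i<m. integral {x i..x (Suc i)} f)"
  using assms
proof (induction m arbitrary: b)
  case 0
  then have "b = a" by (simp add: chain_def)
  then show ?case by simp
next
  case (Suc m)
  have c: "chain a (x m) m x" using Suc.prems unfolding chain_def by auto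
  have le: "a \<le> x m" "x m \<le> b" using chain_in[OF Suc.prems(1), of m] by auto
  have "f integrable_on {a..x m}" by (rule integrable_on_subinterval[OF Suc.prems(2)]) (use le in auto)
  then have "integral {a..x m} f = (\<Sum>i<m. integral {x i..x (Suc i)} f)" using Suc.IH[OF c] by auto
  moreover have "integral {a..x m} f + integral {x m..b} f = integral {a..b} f"
    using Henstock_Kurzweil_Integration.integral_combine[OF le Suc.prems(2)] .
  moreover have "b = x (Suc m)" using Suc.prems unfolding chain_def by auto
  ultimately show ?case by simp
qed

lemma piece:
  fixes G :: "real \<Rightarrow> real"
  assumes G: "mono_on {a..b} G" and dphi: "\<And>x. (\<phi> has_real_derivative \<phi>' x) (at x)"
    and cphi: "continuous_on {a..b} \<phi>'"
    and K: "\<And>x. x \<in> {a..b} \<Longrightarrow> \<bar>\<phi>' x\<bar> \<le> K" and K0: "K \<ge> 0"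
    and uvt: "a \<le> u" "u \<le> t" "t \<le> v" "v \<le> b"
  shows "\<bar>\<phi> t * (G v - G u) - (\<phi> v * G v - \<phi> u * G u) + integral {u..v} (\<lambda>s. G s * \<phi>' s)\<bar>
          \<le> K * (v - u) * (G v - G u)"
proof -
  have intG: "(\<lambda>s. G s * \<phi>' s) integrable_on {c..d}" if "a \<le> c" "d \<le> b" for c d
    by (rule integrable_on_subinterval[OF mono_cont_int[OF G cphi]]) (use that in auto)
  have ftc: "(\<phi>' has_integral (\<phi> d - \<phi> c)) {c..d}" if "c \<le> d" for c d
    using that dphi
    by (intro fundamental_theorem_of_calculus)
       (auto simp: has_real_derivative_iff_has_vector_derivative[symmetric] intro: has_field_derivative_at_within)
  define A1 where "A1 = integral {u..t} (\<lambda>s. G s * \<phi>' s)"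
  define A2 where "A2 = integral {t..v} (\<lambda>s. G s * \<phi>' s)"
  have A12: "integral {u..v} (\<lambda>s. G s * \<phi>' s) = A1 + A2"
    unfolding A1_def A2_def using Henstock_Kurzweil_Integration.integral_combine[of u t v "(\<lambda>s. G s * \<phi>' s)"] intG[of u v] uvt by auto
  have h1: "((\<lambda>s. G s * \<phi>' s - G u * \<phi>' s) has_integral (A1 - G u * (\<phi> t - \<phi> u))) {u..t}"
    unfolding A1_def using uvt
    by (intro has_integral_diff integrable_integral intG has_integral_mult_right ftc) auto
  have h2: "((\<lambda>s. G s * \<phi>' s - G v * \<phi>' s) has_integral (A2 - G v * (\<phi> v - \<phi> t))) {t..v}"
    unfolding A2_def using uvt
    by (intro has_integral_diff integrable_integral intG has_integral_mult_right ftc) auto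
  have Gmon: "G p \<le> G q" if "p \<in> {a..b}" "q \<in> {a..b}" "p \<le> q" for p q
    using G that by (auto simp: mono_on_def)
  have b1: "\<bar>A1 - G u * (\<phi> t - \<phi> u)\<bar> \<le> ((G v - G u) * K) * Henstock_Kurzweil_Integration.content {u..t}"
  proof -
    have "norm (A1 - G u * (\<phi> t - \<phi> u)) \<le> ((G v - G u) * K) * Henstock_Kurzweil_Integration.content {u..t}"
    proof (rule has_integral_bound_real[OF _ _ h1, of _ "{}"])
      show "0 \<le> (G v - G u) * K" using Gmon[of u v] uvt K0 by auto
      fix s assume s: "s \<in> {u..t} - {}"
      have "0 \<le> G s - G u" "G s - G u \<le> G v - G u" using Gmon[of u s] Gmon[of s v] s uvt by auto
      moreover have "\<bar>\<phi>' s\<bar> \<le> K" using K s uvt by auto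
      ultimately show "norm (G s * \<phi>' s - G u * \<phi>' s) \<le> (G v - G u) * K"
        by (auto simp: left_diff_distrib[symmetric] abs_mult intro: mult_mono)
    qed auto
    then show ?thesis by simp
  qed
  have b2: "\<bar>A2 - G v * (\<phi> v - \<phi> t)\<bar> \<le> ((G v - G u) * K) * Henstock_Kurzweil_Integration.content {t..v}"
  proof -
    have "norm (A2 - G v * (\<phi> v - \<phi> t)) \<le> ((G v - G u) * K) * Henstock_Kurzweil_Integration.content {t..v}"
    proof (rule has_integral_bound_real[OF _ _ h2, of _ "{}"])
      show "0 \<le> (G v - G u) * K" using Gmon[of u v] uvt K0 by auto
      fix s assume s: "s \<in> {t..v} - {}"
      have "0 \<le> G v - G s" "G v - G s \<le> G v - G u" using Gmon[of u s] Gmon[of s v] s uvt by auto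
      moreover have "\<bar>\<phi>' s\<bar> \<le> K" using K s uvt by auto
      ultimately have "\<bar>(G v - G s) * \<phi>' s\<bar> \<le> (G v - G u) * K"
        by (auto simp: abs_mult intro: mult_mono)
      moreover have "\<bar>(G s - G v) * \<phi>' s\<bar> = \<bar>(G v - G s) * \<phi>' s\<bar>"
        by (simp add: abs_mult abs_minus_commute)
      ultimately show "norm (G s * \<phi>' s - G v * \<phi>' s) \<le> (G v - G u) * K"
        by (simp add: left_diff_distrib[symmetric])
    qed auto
    then show ?thesis by simp
  qed
  have "\<phi> t * (G v - G u) - (\<phi> v * G v - \<phi> u * G u) + integral {u..v} (\<lambda>s. G s * \<phi>' s)
        = (A1 - G u * (\<phi> t - \<phi> u)) + (A2 - G v * (\<phi> v - \<phi> t))"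
    unfolding A12 by (simp add: algebra_simps)
  also have "\<bar>\<dots>\<bar> \<le> ((G v - G u) * K) * Henstock_Kurzweil_Integration.content {u..t} + ((G v - G u) * K) * Henstock_Kurzweil_Integration.content {t..v}"
    by (rule order_trans[OF abs_triangle_ineq add_mono[OF b1 b2]])
  also have "\<dots> = K * (v - u) * (G v - G u)" using uvt by (simp add: algebra_simps)
  finally show ?thesis .
qed

lemma A2_mono:
  fixes G :: "real \<Rightarrow> real"
  assumes ab: "a \<le> b" and G: "mono_on {a..b} G" and dphi: "\<And>x. (\<phi> has_real_derivative \<phi>' x) (at x)"
    and cphi: "continuous_on {a..b} \<phi>'"
  shows "has_RS_integral \<phi> G a b (\<phi> b * G b - \<phi> a * G a - integral {a..b} (\<lambda>s. G s * \<phi>' s))"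
  unfolding has_RS_iff
proof (intro allI impI)
  fix r :: real assume r: "r > 0"
  obtain K0 where K0: "\<And>x. x \<in> {a..b} \<Longrightarrow> \<bar>\<phi>' x\<bar> \<le> K0"
    using compact_imp_bounded[OF compact_continuous_image[OF cphi compact_Icc]]
    unfolding bounded_iff by (metis image_eqI real_norm_def)
  define K where "K = max K0 0"
  have K: "\<And>x. x \<in> {a..b} \<Longrightarrow> \<bar>\<phi>' x\<bar> \<le> K" "K \<ge> 0" using K0 unfolding K_def by (auto intro: max.coboundedI1)
  have Gmon: "G p \<le> G q" if "p \<in> {a..b}" "q \<in> {a..b}" "p \<le> q" for p q
    using G that by (auto simp: mono_on_def)
  have GD: "G b - G a \<ge> 0" using Gmon[of a b] ab by auto
  define d where "d = r / ((K + 1) * (G b - G a + 1))"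
  have d: "d > 0" unfolding d_def using r K GD by auto
  show "\<exists>d>0. \<forall>m x t. tp a b d m x t \<longrightarrow>
          \<bar>RSsum \<phi> G m x t - (\<phi> b * G b - \<phi> a * G a - integral {a..b} (\<lambda>s. G s * \<phi>' s))\<bar> < r"
  proof (intro exI[of _ d] conjI allI impI d)
    fix m x t assume p: "tp a b d m x t"
    have c: "chain a b m x" using tp_chain[OF p] .
    have xin: "\<And>i. i \<le> m \<Longrightarrow> x i \<in> {a..b}" using tp_in(1)[OF p] .
    have tle: "\<And>i. i < m \<Longrightarrow> x i \<le> t i \<and> t i \<le> x (Suc i) \<and> x (Suc i) - x i < d" using p unfolding tp_def by auto
    define E where "E = (\<lambda>i. \<phi> (t i) * (G (x (Suc i)) - G (x i)) - (\<phi> (x (Suc i)) * G (x (Suc i)) - \<phi> (x i) * G (x i))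
        + integral {x i..x (Suc i)} (\<lambda>s. G s * \<phi>' s))"
    have tel: "(\<Sum>i<m. \<phi> (x (Suc i)) * G (x (Suc i)) - \<phi> (x i) * G (x i)) = \<phi> b * G b - \<phi> a * G a"
      using sum_lessThan_telescope[of "\<lambda>i. \<phi> (x i) * G (x i)" m] c unfolding chain_def by simp
    have int: "integral {a..b} (\<lambda>s. G s * \<phi>' s) = (\<Sum>i<m. integral {x i..x (Suc i)} (\<lambda>s. G s * \<phi>' s))"
      using integral_chain_sum[OF c mono_cont_int[OF G cphi]] .
    have eq: "RSsum \<phi> G m x t - (\<phi> b * G b - \<phi> a * G a - integral {a..b} (\<lambda>s. G s * \<phi>' s)) = (\<Sum>i<m. E i)"
      unfolding RSsum_def E_def tel[symmetric] int sum.distrib sum_subtractf by simp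
    have "\<bar>\<Sum>i<m. E i\<bar> \<le> (\<Sum>i<m. \<bar>E i\<bar>)" by (rule sum_abs)
    also have "\<dots> \<le> (\<Sum>i<m. K * d * (G (x (Suc i)) - G (x i)))"
    proof (intro sum_mono)
      fix i assume i: "i \<in> {..<m}"
      have xi: "x i \<in> {a..b}" "x (Suc i) \<in> {a..b}" using xin i by auto
      have tl: "x i \<le> t i" "t i \<le> x (Suc i)" "x (Suc i) - x i < d" using tle i by auto
      have "\<bar>E i\<bar> \<le> K * (x (Suc i) - x i) * (G (x (Suc i)) - G (x i))"
        unfolding E_def using xi tl by (intro piece[OF G dphi cphi K]) auto
      also have "\<dots> \<le> K * d * (G (x (Suc i)) - G (x i))"
        using tl K(2) Gmon[OF xi] tl by (intro mult_right_mono mult_left_mono) auto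
      finally show "\<bar>E i\<bar> \<le> K * d * (G (x (Suc i)) - G (x i))" .
    qed
    also have "\<dots> = K * d * (G b - G a)"
      using sum_lessThan_telescope[of "\<lambda>i. G (x i)" m] c unfolding chain_def by (simp add: sum_distrib_left[symmetric])
    also have "\<dots> < r"
    proof -
      have "K * (G b - G a) < (K + 1) * (G b - G a + 1)" using K(2) GD by (simp add: algebra_simps) 
      then have "K * (G b - G a) * d < (K + 1) * (G b - G a + 1) * d" using d by simp
      also have "\<dots> = r" unfolding d_def using K(2) GD by simp
      finally show ?thesis by (simp add: algebra_simps)
    qed
    finally show "\<bar>RSsum \<phi> G m x t - (\<phi> b * G b - \<phi> a * G a - integral {a..b} (\<lambda>s. G s * \<phi>' s))\<bar> < r"
      using eq by simp
  qed
qed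

lemma bv_cont_int:
  assumes "bounded_variation_on G a b" "continuous_on {a..b} h"
  shows "(\<lambda>s. G s * h s) integrable_on {a..b}"
proof -
  obtain P Q where PQ: "mono_on {a..b} P" "mono_on {a..b} Q" "\<And>x. x \<in> {a..b} \<Longrightarrow> G x = P x - Q x"
    using bv_decomp[OF assms(1)] by blast
  have "(\<lambda>s. P s * h s - Q s * h s) integrable_on {a..b}"
    using mono_cont_int[OF PQ(1) assms(2)] mono_cont_int[OF PQ(2) assms(2)] by (rule integrable_diff)
  then show ?thesis by (rule integrable_eq) (simp add: PQ(3) algebra_simps)
qed

lemma A2_bv:
  assumes ab: "a \<le> b" and G: "bounded_variation_on G a b" and dphi: "\<And>x. (\<phi> has_real_derivative \<phi>' x) (at x)"
    and cphi: "continuous_on {a..b} \<phi>'"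
  shows "has_RS_integral \<phi> G a b (\<phi> b * G b - \<phi> a * G a - integral {a..b} (\<lambda>s. G s * \<phi>' s))"
proof -
  obtain P Q where PQ: "mono_on {a..b} P" "mono_on {a..b} Q" "\<And>x. x \<in> {a..b} \<Longrightarrow> G x = P x - Q x"
    using bv_decomp[OF G] by blast
  have h: "has_RS_integral \<phi> (\<lambda>x. P x - Q x) a b
      ((\<phi> b * P b - \<phi> a * P a - integral {a..b} (\<lambda>s. P s * \<phi>' s)) -
       (\<phi> b * Q b - \<phi> a * Q a - integral {a..b} (\<lambda>s. Q s * \<phi>' s)))"
    by (intro has_RS_diff A2_mono assms PQ)
  have "integral {a..b} (\<lambda>s. G s * \<phi>' s) = integral {a..b} (\<lambda>s. P s * \<phi>' s - Q s * \<phi>' s)"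
    by (intro integral_cong) (simp add: PQ(3) algebra_simps)
  also have "\<dots> = integral {a..b} (\<lambda>s. P s * \<phi>' s) - integral {a..b} (\<lambda>s. Q s * \<phi>' s)"
    by (intro integral_diff mono_cont_int PQ cphi)
  finally have I: "integral {a..b} (\<lambda>s. G s * \<phi>' s) = integral {a..b} (\<lambda>s. P s * \<phi>' s) - integral {a..b} (\<lambda>s. Q s * \<phi>' s)" .
  have pa: "P a = G a + Q a" and pb: "P b = G b + Q b" using PQ(3)[of a] PQ(3)[of b] ab by auto
  have "(\<phi> b * P b - \<phi> a * P a - integral {a..b} (\<lambda>s. P s * \<phi>' s)) -
       (\<phi> b * Q b - \<phi> a * Q a - integral {a..b} (\<lambda>s. Q s * \<phi>' s))
      = \<phi> b * G b - \<phi> a * G a - integral {a..b} (\<lambda>s. G s * \<phi>' s)"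
    unfolding I pa pb by (simp add: algebra_simps)
  then show ?thesis using has_RS_cong[OF h, of \<phi> G] PQ(3) by auto
qed



lemma indef_lipschitz:
  fixes G :: "real \<Rightarrow> real"
  assumes int: "G integrable_on {a..b}" and C: "\<And>x. x \<in> {a..b} \<Longrightarrow> \<bar>G x\<bar> \<le> C"
    and xy: "x \<in> {a..b}" "y \<in> {a..b}"
  shows "\<bar>integral {a..y} G - integral {a..x} G\<bar> \<le> C * \<bar>y - x\<bar>"
proof -
  have gen: "\<bar>integral {a..q} G - integral {a..p} G\<bar> \<le> C * (q - p)"
    if pq: "p \<in> {a..b}" "q \<in> {a..b}" "p \<le> q" for p q
  proof -
    have iq: "G integrable_on {a..q}" by (rule integrable_on_subinterval[OF int]) (use pq in auto)
    have ipq: "G integrable_on {p..q}" by (rule integrable_on_subinterval[OF int]) (use pq in auto)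
    have "integral {a..p} G + integral {p..q} G = integral {a..q} G"
      using Henstock_Kurzweil_Integration.integral_combine[OF _ _ iq, of p] pq by auto
    then have "integral {a..q} G - integral {a..p} G = integral {p..q} G" by simp
    moreover have "norm (integral {p..q} G) \<le> C * Henstock_Kurzweil_Integration.content {p..q}"
    proof (rule has_integral_bound_real[OF _ _ integrable_integral[OF ipq], of _ "{}"])
      show "0 \<le> C" using C[of p] pq by auto
    qed (use C pq in auto)
    ultimately show ?thesis using pq by simp
  qed
  show ?thesis
  proof (cases "x \<le> y")
    case True then show ?thesis using gen[OF xy True] by simp
  next
    case False then show ?thesis using gen[OF xy(2,1)] by (simp add: abs_minus_commute)
  qed
qed

lemma lipschitz_cont:
  fixes K :: "real \<Rightarrow> real"
  assumes "\<And>x y. x \<in> S \<Longrightarrow> y \<in> S \<Longrightarrow> \<bar>K y - K x\<bar> \<le> C * \<bar>y - x\<bar>"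
  shows "continuous_on S K"
  unfolding continuous_on_iff
proof (intro ballI allI impI)
  fix x e assume x: "x \<in> S" and e: "(e::real) > 0"
  define C' where "C' = max C 0 + 1"
  have C': "C' > 0" "C \<le> C'" unfolding C'_def by auto
  show "\<exists>d>0. \<forall>x'\<in>S. dist x' x < d \<longrightarrow> dist (K x') (K x) < e"
  proof (intro exI[of _ "e / C'"] conjI ballI impI)
    show "e / C' > 0" using e C' by simp
    fix y assume y: "y \<in> S" "dist y x < e / C'"
    have "\<bar>K y - K x\<bar> \<le> C * \<bar>y - x\<bar>" using assms x y by auto
    also have "\<dots> \<le> C' * \<bar>y - x\<bar>" using C' by (simp add: mult_right_mono)
    also have "\<dots> < C' * (e / C')" using y C' by (intro mult_strict_left_mono) (auto simp: dist_real_def)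
    also have "\<dots> = e" using C' by simp
    finally show "dist (K y) (K x) < e" by (simp add: dist_real_def)
  qed
qed

lemma J_props:
  assumes bv: "bounded_variation_on F a b" and ab: "a \<le> b"
  shows "bounded_variation_on (J k F a) a b \<and> (\<exists>C. \<forall>x\<in>{a..b}. \<bar>J k F a x\<bar> \<le> C)
     \<and> J k F a integrable_on {a..b}"
proof (induction k)
  case 0
  obtain C where C: "\<And>x. x \<in> {a..b} \<Longrightarrow> \<bar>F x\<bar> \<le> C" using bv_bounded[OF bv] by blast
  have "\<forall>x\<in>{a..b}. \<bar>J 0 F a x\<bar> \<le> C" using C by simp
  then have "\<exists>C. \<forall>x\<in>{a..b}. \<bar>J 0 F a x\<bar> \<le> C" by blast
  then show ?case using bv bv_integrable[OF bv order_refl order_refl] by auto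
next
  case (Suc k)
  obtain C0 where C0: "\<And>x. x \<in> {a..b} \<Longrightarrow> \<bar>J k F a x\<bar> \<le> C0" using Suc.IH by blast
  define C where "C = max C0 0"
  have C: "\<And>x. x \<in> {a..b} \<Longrightarrow> \<bar>J k F a x\<bar> \<le> C" "C \<ge> 0" using C0 unfolding C_def by (auto intro: max.coboundedI1)
  have int: "J k F a integrable_on {a..b}" using Suc.IH by blast
  have lip: "\<bar>J (Suc k) F a y - J (Suc k) F a x\<bar> \<le> C * \<bar>y - x\<bar>" if "x \<in> {a..b}" "y \<in> {a..b}" for x y
    using indef_lipschitz[OF int C(1) that] by simp
  have bvS: "bounded_variation_on (J (Suc k) F a) a b" by (rule bv_lipschitz[OF lip])
  have "\<bar>J (Suc k) F a x\<bar> \<le> C * (b - a)" if "x \<in> {a..b}" for x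
  proof -
    have "\<bar>J (Suc k) F a x - J (Suc k) F a a\<bar> \<le> C * \<bar>x - a\<bar>" using lip[of a x] that ab by auto
    moreover have "J (Suc k) F a a = 0" by simp
    moreover have "C * (x - a) \<le> C * (b - a)" using that C(2) by (intro mult_left_mono) auto
    ultimately show ?thesis using that by auto
  qed
  then show ?case using bvS bv_integrable[OF bvS order_refl order_refl] by blast
qed

lemma J_cont:
  assumes bv: "bounded_variation_on F a b" and ab: "a \<le> b"
  shows "continuous_on {a..b} (J (Suc k) F a)"
proof -
  obtain C0 where C0: "\<And>x. x \<in> {a..b} \<Longrightarrow> \<bar>J k F a x\<bar> \<le> C0" using J_props[OF bv ab, of k] by blast
  have int: "J k F a integrable_on {a..b}" using J_props[OF bv ab, of k] by blast
  show ?thesis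
    by (rule lipschitz_cont[of _ _ C0]) (use indef_lipschitz[OF int C0] in simp)
qed

lemma J_diff:
  assumes bv1: "bounded_variation_on F1 a b" and bv2: "bounded_variation_on F2 a b" and ab: "a \<le> b"
  shows "x \<in> {a..b} \<Longrightarrow> J k (\<lambda>x. F2 x - F1 x) a x = J k F2 a x - J k F1 a x"
proof (induction k arbitrary: x)
  case 0 then show ?case by simp
next
  case (Suc k)
  have i1: "J k F1 a integrable_on {a..x}" "J k F2 a integrable_on {a..x}"
    using J_props[OF bv1 ab, of k] J_props[OF bv2 ab, of k] Suc.prems
    by (auto intro: integrable_on_subinterval)
  have "J (Suc k) (\<lambda>x. F2 x - F1 x) a x = integral {a..x} (\<lambda>s. J k F2 a s - J k F1 a s)"
    using Suc.IH Suc.prems by (simp, intro integral_cong) auto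
  also have "\<dots> = J (Suc k) F2 a x - J (Suc k) F1 a x"
    using integral_diff[OF i1(2) i1(1)] by simp
  finally show ?case .
qed

lemma RS_indef:
  fixes G \<phi> :: "real \<Rightarrow> real"
  assumes ab: "a \<le> b" and int: "G integrable_on {a..b}" and C: "\<And>x. x \<in> {a..b} \<Longrightarrow> \<bar>G x\<bar> \<le> C"
    and cphi: "continuous_on {a..b} \<phi>" and intp: "(\<lambda>s. G s * \<phi> s) integrable_on {a..b}"
  shows "has_RS_integral \<phi> (\<lambda>x. integral {a..x} G) a b (integral {a..b} (\<lambda>s. G s * \<phi> s))"
  unfolding has_RS_iff
proof (intro allI impI)
  fix r :: real assume r: "r > 0"
  define C' where "C' = max C 0"
  have C': "\<And>x. x \<in> {a..b} \<Longrightarrow> \<bar>G x\<bar> \<le> C'" "C' \<ge> 0" using C unfolding C'_def by (auto intro: max.coboundedI1)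
  define e where "e = r / ((C' + 1) * (b - a + 1))"
  have e: "e > 0" unfolding e_def using r C' ab by auto
  have "uniformly_continuous_on {a..b} \<phi>" using compact_uniformly_continuous[OF cphi compact_Icc] .
  then obtain d where d: "d > 0" "\<And>x x'. x \<in> {a..b} \<Longrightarrow> x' \<in> {a..b} \<Longrightarrow> dist x' x < d \<Longrightarrow> dist (\<phi> x') (\<phi> x) < e"
    unfolding uniformly_continuous_on_def using e by metis
  show "\<exists>d>0. \<forall>m x t. tp a b d m x t \<longrightarrow>
      \<bar>RSsum \<phi> (\<lambda>x. integral {a..x} G) m x t - integral {a..b} (\<lambda>s. G s * \<phi> s)\<bar> < r"
  proof (intro exI[of _ d] conjI allI impI d)
    fix m x t assume p: "tp a b d m x t"
    have c: "chain a b m x" using tp_chain[OF p] .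
    have xin: "\<And>i. i \<le> m \<Longrightarrow> x i \<in> {a..b}" using tp_in(1)[OF p] .
    have tle: "\<And>i. i < m \<Longrightarrow> x i \<le> t i \<and> t i \<le> x (Suc i) \<and> x (Suc i) - x i < d" using p unfolding tp_def by auto
    have intsub: "\<And>u v. u \<in> {a..b} \<Longrightarrow> v \<in> {a..b} \<Longrightarrow> G integrable_on {u..v}"
      by (rule integrable_on_subinterval[OF int]) auto
    have intpsub: "\<And>u v. u \<in> {a..b} \<Longrightarrow> v \<in> {a..b} \<Longrightarrow> (\<lambda>s. G s * \<phi> s) integrable_on {u..v}"
      by (rule integrable_on_subinterval[OF intp]) auto
    define E where "E = (\<lambda>i. \<phi> (t i) * integral {x i..x (Suc i)} G - integral {x i..x (Suc i)} (\<lambda>s. G s * \<phi> s))"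
    have diffK: "integral {a..x (Suc i)} G - integral {a..x i} G = integral {x i..x (Suc i)} G" if i: "i < m" for i
    proof -
      have "x i \<in> {a..b}" "x (Suc i) \<in> {a..b}" "x i \<le> x (Suc i)" using xin i tle[OF i] by auto
      then show ?thesis
        using Henstock_Kurzweil_Integration.integral_combine[OF _ _ intsub[of a "x (Suc i)"], of "x i"] ab by auto
    qed
    have eq: "RSsum \<phi> (\<lambda>x. integral {a..x} G) m x t - integral {a..b} (\<lambda>s. G s * \<phi> s) = (\<Sum>i<m. E i)"
      unfolding RSsum_def E_def integral_chain_sum[OF c intp] sum_subtractf[symmetric]
      by (intro sum.cong) (auto simp: diffK)
    have "\<bar>\<Sum>i<m. E i\<bar> \<le> (\<Sum>i<m. \<bar>E i\<bar>)" by (rule sum_abs)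
    also have "\<dots> \<le> (\<Sum>i<m. C' * e * (x (Suc i) - x i))"
    proof (intro sum_mono)
      fix i assume i: "i \<in> {..<m}"
      have xi: "x i \<in> {a..b}" "x (Suc i) \<in> {a..b}" using xin i by auto
      have tl: "x i \<le> t i" "t i \<le> x (Suc i)" "x (Suc i) - x i < d" using tle i by auto
      have "E i = integral {x i..x (Suc i)} (\<lambda>s. G s * \<phi> (t i) - G s * \<phi> s)"
      proof -
        have i1: "(\<lambda>s. G s * \<phi> (t i)) integrable_on {x i..x (Suc i)}"
          using intsub[OF xi] by (rule integrable_on_mult_left)
        have "integral {x i..x (Suc i)} (\<lambda>s. G s * \<phi> (t i) - G s * \<phi> s)
            = integral {x i..x (Suc i)} (\<lambda>s. G s * \<phi> (t i)) - integral {x i..x (Suc i)} (\<lambda>s. G s * \<phi> s)"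
          by (rule integral_diff[OF i1 intpsub[OF xi]])
        also have "integral {x i..x (Suc i)} (\<lambda>s. G s * \<phi> (t i)) = integral {x i..x (Suc i)} G * \<phi> (t i)"
          by (rule integral_mult_left)
        finally show ?thesis unfolding E_def by (simp add: mult.commute)
      qed
      also have "\<bar>\<dots>\<bar> \<le> (C' * e) * Henstock_Kurzweil_Integration.content {x i..x (Suc i)}"
      proof -
        have "((\<lambda>s. G s * \<phi> (t i) - G s * \<phi> s) has_integral integral {x i..x (Suc i)} (\<lambda>s. G s * \<phi> (t i) - G s * \<phi> s)) {x i..x (Suc i)}"
          using intsub[OF xi] intpsub[OF xi]
          by (intro integrable_integral integrable_diff integrable_on_mult_left) auto
        note hi = this
        have "norm (integral {x i..x (Suc i)} (\<lambda>s. G s * \<phi> (t i) - G s * \<phi> s)) \<le> (C' * e) * Henstock_Kurzweil_Integration.content {x i..x (Suc i)}"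
        proof (rule has_integral_bound_real[OF _ _ hi, of _ "{}"])
          show "0 \<le> C' * e" using C' e by auto
          fix s assume s: "s \<in> {x i..x (Suc i)} - {}"
          then have sin: "s \<in> {a..b}" using xi by auto
          have tin: "t i \<in> {a..b}" using tl xi by auto
          have "dist (t i) s < d" using s tl by (auto simp: dist_real_def)
          then have "\<bar>\<phi> (t i) - \<phi> s\<bar> < e" using d(2)[OF sin tin] by (simp add: dist_real_def)
          moreover have "\<bar>G s\<bar> \<le> C'" using C' sin by auto
          ultimately have "\<bar>G s\<bar> * \<bar>\<phi> (t i) - \<phi> s\<bar> \<le> C' * e" by (intro mult_mono) auto
          then show "norm (G s * \<phi> (t i) - G s * \<phi> s) \<le> C' * e"
            by (simp add: right_diff_distrib[symmetric] abs_mult)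
        qed auto
        then show ?thesis by simp
      qed
      also have "\<dots> = C' * e * (x (Suc i) - x i)" using tl by simp
      finally show "\<bar>E i\<bar> \<le> C' * e * (x (Suc i) - x i)" .
    qed
    also have "\<dots> = C' * e * (b - a)"
      using sum_lessThan_telescope[of x m] c unfolding chain_def by (simp add: sum_distrib_left[symmetric])
    also have "\<dots> < r"
    proof -
      have "C' * (b - a) < (C' + 1) * (b - a + 1)" using C'(2) ab by (simp add: algebra_simps)
      then have "C' * (b - a) * e < (C' + 1) * (b - a + 1) * e" using e by simp
      also have "\<dots> = r" unfolding e_def using C'(2) ab by simp
      finally show ?thesis by (simp add: algebra_simps)
    qed
    finally show "\<bar>RSsum \<phi> (\<lambda>x. integral {a..x} G) m x t - integral {a..b} (\<lambda>s. G s * \<phi> s)\<bar> < r"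
      using eq by simp
  qed
qed



lemma J_Suc_fun: "J (Suc k) F a = (\<lambda>x. integral {a..x} (J k F a))"
  by (rule ext) simp

lemma deriv_cont:
  assumes "\<And>x. (\<phi> has_real_derivative \<phi>' x) (at x)"
  shows "continuous_on S \<phi>"
  using assms by (meson DERIV_isCont continuous_at_imp_continuous_on)

lemma IBP1:
  assumes bv: "bounded_variation_on F a b" and ab: "a \<le> b"
    and dphi: "\<And>x. (\<phi> has_real_derivative \<phi>' x) (at x)" and cphi': "continuous_on {a..b} \<phi>'"
  shows "integral {a..b} (\<lambda>s. J k F a s * \<phi> s)
       = \<phi> b * J (Suc k) F a b - integral {a..b} (\<lambda>s. J (Suc k) F a s * \<phi>' s)"
proof -
  obtain C where C: "\<And>x. x \<in> {a..b} \<Longrightarrow> \<bar>J k F a x\<bar> \<le> C" using J_props[OF bv ab, of k] by blast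
  have int: "J k F a integrable_on {a..b}" using J_props[OF bv ab, of k] by blast
  have bvk: "bounded_variation_on (J k F a) a b" using J_props[OF bv ab, of k] by blast
  have bvk1: "bounded_variation_on (J (Suc k) F a) a b" using J_props[OF bv ab, of "Suc k"] by blast
  have cphi: "continuous_on {a..b} \<phi>" using deriv_cont[OF dphi] .
  have intp: "(\<lambda>s. J k F a s * \<phi> s) integrable_on {a..b}" using bv_cont_int[OF bvk cphi] .
  have h1: "has_RS_integral \<phi> (J (Suc k) F a) a b (integral {a..b} (\<lambda>s. J k F a s * \<phi> s))"
    unfolding J_Suc_fun by (rule RS_indef[OF ab int C cphi intp])
  have h2: "has_RS_integral \<phi> (J (Suc k) F a) a b
      (\<phi> b * J (Suc k) F a b - \<phi> a * J (Suc k) F a a - integral {a..b} (\<lambda>s. J (Suc k) F a s * \<phi>' s))"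
    by (rule A2_bv[OF ab bvk1 dphi cphi'])
  have "J (Suc k) F a a = 0" by simp
  then show ?thesis using has_RS_unique[OF ab h1 h2] by simp
qed

lemma IBPn:
  assumes bv: "bounded_variation_on H a b" and ab: "a \<le> b" and Ha: "H a = 0"
    and deriv: "\<And>k x. k \<le> r \<Longrightarrow> (D k has_real_derivative D (Suc k) x) (at x)"
    and cont: "continuous_on {a..b} (D (Suc r))"
  shows "has_RS_integral (D 0) H a b
     ((\<Sum>k\<le>r. (-1)^k * D k b * J k H a b) + (-1)^(Suc r) * integral {a..b} (\<lambda>s. J r H a s * D (Suc r) s))"
  using deriv cont
proof (induction r)
  case 0
  have h: "has_RS_integral (D 0) H a b (D 0 b * H b - D 0 a * H a - integral {a..b} (\<lambda>s. H s * D (Suc 0) s))"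
    by (rule A2_bv[OF ab bv]) (use 0 in auto)
  then show ?case using Ha by simp
next
  case (Suc r)
  have d: "\<And>k x. k \<le> r \<Longrightarrow> (D k has_real_derivative D (Suc k) x) (at x)" using Suc.prems by auto
  have c: "continuous_on {a..b} (D (Suc r))" by (rule deriv_cont) (use Suc.prems in auto)
  have IH: "has_RS_integral (D 0) H a b
     ((\<Sum>k\<le>r. (-1)^k * D k b * J k H a b) + (-1)^(Suc r) * integral {a..b} (\<lambda>s. J r H a s * D (Suc r) s))"
    using Suc.IH[OF d c] .
  have ib: "integral {a..b} (\<lambda>s. J r H a s * D (Suc r) s)
       = D (Suc r) b * J (Suc r) H a b - integral {a..b} (\<lambda>s. J (Suc r) H a s * D (Suc (Suc r)) s)"
    by (rule IBP1[OF bv ab]) (use Suc.prems in auto)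
  have "(\<Sum>k\<le>r. (-1)^k * D k b * J k H a b) + (-1)^(Suc r) * integral {a..b} (\<lambda>s. J r H a s * D (Suc r) s)
      = (\<Sum>k\<le>Suc r. (-1)^k * D k b * J k H a b) + (-1)^(Suc (Suc r)) * integral {a..b} (\<lambda>s. J (Suc r) H a s * D (Suc (Suc r)) s)"
    unfolding ib by (simp add: algebra_simps)
  then show ?case using IH by metis
qed



fun fwd :: "nat \<Rightarrow> (nat \<Rightarrow> real) \<Rightarrow> nat \<Rightarrow> real" where
  "fwd 0 c k = c k"
| "fwd (Suc j) c k = fwd j c (Suc k) - fwd j c k"

lemma fwd_closed: "fwd j c k = (\<Sum>i\<le>j. (-1)^(j-i) * real (j choose i) * c (k+i))"
proof (induction j arbitrary: k)
  case 0 then show ?case by simp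
next
  case (Suc j)
  define g where "g = (\<lambda>i. (-1::real)^(Suc j - i) * real (j choose i) * c (k+i))"
  have A: "(\<Sum>i\<le>Suc j. (-1)^(Suc j-i) * real (Suc j choose i) * c (k+i))
     = (-1)^(Suc j) * c k + (\<Sum>i\<le>j. (-1)^(j-i) * real (j choose i) * c (k + Suc i))
        + (\<Sum>i\<le>j. (-1)^(j-i) * real (j choose Suc i) * c (k + Suc i))"
    unfolding sum.atMost_Suc_shift by (simp add: sum.distrib algebra_simps)
  have B: "(-1)^(Suc j) * c k + (\<Sum>i\<le>j. (-1)^(j-i) * real (j choose Suc i) * c (k + Suc i))
      = (\<Sum>i\<le>Suc j. g i)"
    unfolding sum.atMost_Suc_shift g_def by simp
  have C: "(\<Sum>i\<le>Suc j. g i) = - (\<Sum>i\<le>j. (-1)^(j-i) * real (j choose i) * c (k+i))"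
  proof -
    have "(\<Sum>i\<le>Suc j. g i) = (\<Sum>i\<le>j. g i)" by (simp add: g_def)
    also have "\<dots> = (\<Sum>i\<le>j. - ((-1)^(j-i) * real (j choose i) * c (k+i)))"
      by (intro sum.cong) (auto simp: g_def Suc_diff_le)
    finally show ?thesis by (simp add: sum_negf)
  qed
  have "fwd (Suc j) c k = (\<Sum>i\<le>j. (-1)^(j-i) * real (j choose i) * c (k + Suc i))
        - (\<Sum>i\<le>j. (-1)^(j-i) * real (j choose i) * c (k+i))"
    using Suc.IH[of "Suc k"] Suc.IH[of k] by simp
  also have "\<dots> = (\<Sum>i\<le>Suc j. (-1)^(Suc j-i) * real (Suc j choose i) * c (k+i))"
    unfolding A using B C by simp
  finally show ?case .
qed

lemma prod_top: "(\<Prod>j\<le>N. real (Suc N) - real j) = fact (Suc N)"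
proof -
  have "fact (Suc N) = (of_nat (\<Prod>i = 0..<Suc N. Suc N - i) :: real)" by (rule fact_prod_rev)
  also have "\<dots> = (\<Prod>i = 0..<Suc N. real (Suc N - i))" by simp
  also have "\<dots> = (\<Prod>j\<le>N. real (Suc N) - real j)"
    by (intro prod.cong) (auto simp: of_nat_diff)
  finally show ?thesis by simp
qed

lemma prod_P: "i \<le> N \<Longrightarrow> (\<Prod>j\<in>{..N} - {i}. real i - real j) = (-1)^(N-i) * fact i * fact (N-i)"
proof (induction N arbitrary: i)
  case 0 then show ?case by simp
next
  case (Suc N)
  show ?case
  proof (cases "i = Suc N")
    case True
    have "{..Suc N} - {i} = {..N}" using True by auto
    then show ?thesis using True prod_top by simp
  next
    case False
    then have iN: "i \<le> N" using Suc.prems by simp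
    have "{..Suc N} - {i} = insert (Suc N) ({..N} - {i})" using iN by auto
    then have "(\<Prod>j\<in>{..Suc N} - {i}. real i - real j) = (real i - real (Suc N)) * (\<Prod>j\<in>{..N} - {i}. real i - real j)"
      by simp
    also have "\<dots> = (real i - real (Suc N)) * ((-1)^(N-i) * fact i * fact (N-i))" using Suc.IH[OF iN] by simp
    also have "\<dots> = (-1)^(Suc N - i) * fact i * fact (Suc N - i)"
    proof -
      have e: "Suc N - i = Suc (N - i)" using iN by simp
      show ?thesis unfolding e using iN by (simp add: of_nat_diff algebra_simps)
    qed
    finally show ?thesis .
  qed
qed

lemma dd_equi:
  assumes h: "h \<noteq> 0" and x: "\<And>i. x i = p + real i * h"
  shows "divided_diff N x f = (\<Sum>i\<le>N. (-1)^(N-i) * real (N choose i) * f (x i)) / (h^N * fact N)"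
proof -
  have tm: "f (x i) / (\<Prod>j\<in>{..N} - {i}. x i - x j) = (-1)^(N-i) * real (N choose i) * f (x i) / (h^N * fact N)"
    if i: "i \<le> N" for i
  proof -
    have "(\<Prod>j\<in>{..N} - {i}. x i - x j) = (\<Prod>j\<in>{..N} - {i}. h * (real i - real j))"
      by (intro prod.cong) (auto simp: x algebra_simps)
    also have "\<dots> = h ^ card ({..N} - {i}) * (\<Prod>j\<in>{..N} - {i}. real i - real j)"
      by (simp add: prod.distrib)
    also have "card ({..N} - {i}) = N" using i by simp
    also have "(\<Prod>j\<in>{..N} - {i}. real i - real j) = (-1)^(N-i) * fact i * fact (N-i)" using prod_P[OF i] .
    finally have pr: "(\<Prod>j\<in>{..N} - {i}. x i - x j) = h^N * ((-1)^(N-i) * fact i * fact (N-i))" .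
    have bin: "real (N choose i) = fact N / (fact i * fact (N - i))" using binomial_fact[OF i] by simp
    have s: "((-1::real)^(N-i)) * (-1)^(N-i) = 1" by (simp add: power_mult_distrib[symmetric])
    show ?thesis unfolding pr bin using h s
      by (simp add: field_simps)
  qed
  show ?thesis unfolding divided_diff_def
    by (simp add: tm sum_divide_distrib)
qed

lemma fwd_nonneg:
  assumes conv: "n_convex_on n {a..b} f" and ab: "a < b" and m: "m > 0"
    and c: "\<And>k. c k = f (a + real k * ((b - a) / m))" and km: "k + Suc n \<le> m"
  shows "fwd (Suc n) c k \<ge> 0"
proof -
  define h where "h = (b - a) / m"
  have h: "h > 0" unfolding h_def using ab m by simp
  define x where "x = (\<lambda>i. (a + real k * h) + real i * h)"
  have xin: "x i \<in> {a..b}" if "i \<le> Suc n" for i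
  proof -
    have "x i = a + real (k + i) * h" unfolding x_def by (simp add: algebra_simps)
    moreover have "real (k + i) * h \<le> real m * h" using km that h by (intro mult_right_mono) auto
    moreover have "real m * h = b - a" unfolding h_def using m by simp
    ultimately show ?thesis using h by (auto intro: mult_nonneg_nonneg)
  qed
  have inj: "inj_on x {..n+1}" unfolding x_def inj_on_def using h by auto
  have dd: "divided_diff (n+1) x f \<ge> 0" using conv xin inj unfolding n_convex_on_def by auto
  have "divided_diff (Suc n) x f = (\<Sum>i\<le>Suc n. (-1)^(Suc n-i) * real (Suc n choose i) * f (x i)) / (h^Suc n * fact (Suc n))"
    by (rule dd_equi) (use h in \<open>auto simp: x_def\<close>)
  also have "(\<Sum>i\<le>Suc n. (-1)^(Suc n-i) * real (Suc n choose i) * f (x i)) = fwd (Suc n) c k"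
    unfolding fwd_closed c h_def[symmetric] x_def by (intro sum.cong) (auto simp: algebra_simps)
  finally have "fwd (Suc n) c k = divided_diff (Suc n) x f * (h^Suc n * fact (Suc n))" using h by simp
  then show ?thesis using dd h by simp
qed



definition bb :: "real \<Rightarrow> real \<Rightarrow> nat \<Rightarrow> nat \<Rightarrow> real \<Rightarrow> real" where
  "bb a b M k t = real (M choose k) * (t - a)^k * (b - t)^(M - k)"

lemma bb_deriv_raw:
  "((bb a b M k) has_real_derivative real (M choose k) * (real k * (t-a)^(k-1) * (b-t)^(M-k)
       - (t-a)^k * (real (M-k) * (b-t)^(M-k-1)))) (at t)"
proof -
  have d1: "((\<lambda>t. (t - a)^k) has_real_derivative real k * (t - a)^(k - 1)) (at t)"
    by (rule DERIV_cong[OF DERIV_power[OF DERIV_diff[OF DERIV_ident DERIV_const]]]) simp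
  have d2: "((\<lambda>t. (b - t)^(M-k)) has_real_derivative - (real (M-k) * (b - t)^(M-k-1))) (at t)"
    by (rule DERIV_cong[OF DERIV_power[OF DERIV_diff[OF DERIV_const DERIV_ident]]]) simp
  have "((\<lambda>t. real (M choose k) * ((t - a)^k * (b - t)^(M - k))) has_real_derivative
      real (M choose k) * (real k * (t - a)^(k - 1) * (b - t)^(M - k) + (t - a)^k * - (real (M-k) * (b - t)^(M-k-1)))) (at t)"
    by (intro DERIV_cmult DERIV_cong[OF DERIV_mult[OF d1 d2]]) simp
  then show ?thesis unfolding bb_def by (simp add: algebra_simps)
qed

lemma bb_deriv:
  "((bb a b (Suc M) k) has_real_derivative
     real (Suc M) * ((if k = 0 then 0 else bb a b M (k - 1) t) - bb a b M k t)) (at t)"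
proof (cases k)
  case 0
  show ?thesis
    by (rule DERIV_cong[OF bb_deriv_raw]) (simp add: 0 bb_def)
next
  case (Suc j)
  have e1: "real (Suc M choose Suc j) * real (Suc j) = real (Suc M) * real (M choose j)"
    using Suc_times_binomial[of j M] by (metis of_nat_mult mult.commute)
  have e2: "real (Suc M choose Suc j) * real (M - j) = real (Suc M) * real (M choose Suc j)"
    using binomial_absorb_comp[of "Suc M" "Suc j"] by (metis of_nat_mult mult.commute diff_Suc_Suc diff_Suc_1)
  have e3: "M - j - 1 = M - Suc j" by simp
  show ?thesis
  proof (rule DERIV_cong[OF bb_deriv_raw])
    have "real (Suc M choose k) * (real k * (t - a) ^ (k - 1) * (b - t) ^ (Suc M - k) -
          (t - a) ^ k * (real (Suc M - k) * (b - t) ^ (Suc M - k - 1)))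
        = (real (Suc M choose Suc j) * real (Suc j)) * ((t - a) ^ j * (b - t) ^ (M - j))
          - (real (Suc M choose Suc j) * real (M - j)) * ((t - a) ^ Suc j * (b - t) ^ (M - Suc j))"
      unfolding Suc by (simp add: e3 algebra_simps)
    also have "\<dots> = real (Suc M) * ((if k = 0 then 0 else bb a b M (k - 1) t) - bb a b M k t)"
      unfolding e1 e2 Suc bb_def by (simp add: algebra_simps)
    finally show "real (Suc M choose k) * (real k * (t - a) ^ (k - 1) * (b - t) ^ (Suc M - k) -
          (t - a) ^ k * (real (Suc M - k) * (b - t) ^ (Suc M - k - 1))) =
        real (Suc M) * ((if k = 0 then 0 else bb a b M (k - 1) t) - bb a b M k t)" .
  qed
qed

lemma bb_zero: "k > M \<Longrightarrow> bb a b M k t = 0"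
  unfolding bb_def by simp

lemma bsum_deriv:
  "((\<lambda>t. \<Sum>k\<le>Suc M. c k * bb a b (Suc M) k t) has_real_derivative
     real (Suc M) * (\<Sum>k\<le>M. (c (Suc k) - c k) * bb a b M k t)) (at t)"
proof (rule DERIV_cong)
  show "((\<lambda>t. \<Sum>k\<le>Suc M. c k * bb a b (Suc M) k t) has_real_derivative
     (\<Sum>k\<le>Suc M. c k * (real (Suc M) * ((if k = 0 then 0 else bb a b M (k - 1) t) - bb a b M k t)))) (at t)"
    by (intro DERIV_sum DERIV_cmult bb_deriv)
  have s1: "(\<Sum>k\<le>Suc M. c k * (if k = 0 then 0 else bb a b M (k - 1) t)) = (\<Sum>k\<le>M. c (Suc k) * bb a b M k t)"
    unfolding sum.atMost_Suc_shift by simp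
  have s2: "(\<Sum>k\<le>Suc M. c k * bb a b M k t) = (\<Sum>k\<le>M. c k * bb a b M k t)"
    by (simp add: bb_zero)
  have "(\<Sum>k\<le>Suc M. c k * (real (Suc M) * ((if k = 0 then 0 else bb a b M (k - 1) t) - bb a b M k t)))
      = (\<Sum>k\<le>Suc M. real (Suc M) * (c k * (if k = 0 then 0 else bb a b M (k - 1) t) - c k * bb a b M k t))"
    by (intro sum.cong) (simp_all add: algebra_simps)
  also have "\<dots> = real (Suc M) * ((\<Sum>k\<le>Suc M. c k * (if k = 0 then 0 else bb a b M (k - 1) t)) - (\<Sum>k\<le>Suc M. c k * bb a b M k t))"
    by (simp add: sum_distrib_left[symmetric] sum_subtractf)
  also have "\<dots> = real (Suc M) * (\<Sum>k\<le>M. (c (Suc k) - c k) * bb a b M k t)"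
    unfolding s1 s2 by (simp add: sum_subtractf[symmetric] left_diff_distrib)
  finally show "(\<Sum>k\<le>Suc M. c k * (real (Suc M) * ((if k = 0 then 0 else bb a b M (k - 1) t) - bb a b M k t)))
      = real (Suc M) * (\<Sum>k\<le>M. (c (Suc k) - c k) * bb a b M k t)" .
qed



definition BD :: "real \<Rightarrow> real \<Rightarrow> nat \<Rightarrow> (nat \<Rightarrow> real) \<Rightarrow> nat \<Rightarrow> real \<Rightarrow> real" where
  "BD a b m c j t = fact m / fact (m - j) / (b - a)^m * (\<Sum>k\<le>m-j. fwd j c k * bb a b (m-j) k t)"

lemma BD_deriv:
  assumes "j < m" and ab: "a < b"
  shows "((BD a b m c j) has_real_derivative BD a b m c (Suc j) t) (at t)"
proof -
  define M where "M = m - Suc j"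
  have mj: "m - j = Suc M" unfolding M_def using assms by simp
  have d: "((\<lambda>t. \<Sum>k\<le>Suc M. fwd j c k * bb a b (Suc M) k t) has_real_derivative
     real (Suc M) * (\<Sum>k\<le>M. fwd (Suc j) c k * bb a b M k t)) (at t)"
    using bsum_deriv[where M=M and c="fwd j c" and a=a and b=b and t=t] by simp
  have "((BD a b m c j) has_real_derivative
      fact m / fact (m - j) / (b - a)^m * (real (Suc M) * (\<Sum>k\<le>M. fwd (Suc j) c k * bb a b M k t))) (at t)"
    unfolding BD_def mj by (rule DERIV_cmult[OF d])
  moreover have "fact m / fact (m - j) / (b - a)^m * (real (Suc M) * (\<Sum>k\<le>M. fwd (Suc j) c k * bb a b M k t))
      = BD a b m c (Suc j) t"
  proof -
    have mm: "m - Suc j = M" unfolding M_def by simp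
    have e: "fact m / fact (Suc M) / (b - a)^m * (real (Suc M) * X) = fact m / fact M / (b - a)^m * X" for X :: real
      using ab by (simp add: fact_Suc field_simps del: of_nat_Suc)
    show ?thesis unfolding mj e unfolding BD_def mm ..
  qed
  ultimately show ?thesis by simp
qed

lemma BD_cont: "continuous_on S (BD a b m c j)"
  unfolding BD_def bb_def by (intro continuous_intros)

lemma bb_nonneg: "t \<in> {a..b} \<Longrightarrow> bb a b M k t \<ge> 0"
  unfolding bb_def by auto

lemma BD_nonneg:
  assumes conv: "n_convex_on n {a..b} f" and ab: "a < b" and m: "Suc n \<le> m"
    and c: "\<And>k. c k = f (a + real k * ((b - a) / m))" and t: "t \<in> {a..b}"
  shows "BD a b m c (Suc n) t \<ge> 0"
  unfolding BD_def
proof (intro mult_nonneg_nonneg sum_nonneg)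
  fix k assume k: "k \<in> {..m - Suc n}"
  show "fwd (Suc n) c k \<ge> 0" by (rule fwd_nonneg[OF conv ab _ c]) (use m k in auto)
  show "bb a b (m - Suc n) k t \<ge> 0" using bb_nonneg[OF t] .
qed (use ab in auto)

lemma BD_bern:
  assumes "a < b"
  shows "BD a b m c 0 t = (\<Sum>k\<le>m. c k * Bernstein m k ((t - a) / (b - a)))"
proof -
  have "BD a b m c 0 t = (\<Sum>k\<le>m. c k * (bb a b m k t / (b - a)^m))"
    unfolding BD_def by (simp add: sum_divide_distrib)
  also have "\<dots> = (\<Sum>k\<le>m. c k * Bernstein m k ((t - a) / (b - a)))"
  proof (intro sum.cong refl)
    fix k assume k: "k \<in> {..m}"
    have e: "1 - (t - a) / (b - a) = (b - t) / (b - a)" using assms by (simp add: field_simps)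
    have "(b - a)^m = (b - a)^k * (b - a)^(m - k)" using k by (simp add: power_add[symmetric])
    then show "c k * (bb a b m k t / (b - a)^m) = c k * Bernstein m k ((t - a) / (b - a))"
      unfolding Bernstein_def bb_def e using assms by (simp add: power_divide field_simps)
  qed
  finally show ?thesis .
qed

definition cf :: "(real \<Rightarrow> real) \<Rightarrow> real \<Rightarrow> real \<Rightarrow> nat \<Rightarrow> nat \<Rightarrow> real" where
  "cf f a b m k = f (a + real k * ((b - a) / m))"

lemma bern_approx:
  assumes cont: "continuous_on {a..b} f" and ab: "a < b" and e: "e > 0"
  shows "\<exists>N. \<forall>m\<ge>N. \<forall>x\<in>{a..b}. \<bar>f x - BD a b m (cf f a b m) 0 x\<bar> < e"
proof -
  define g where "g = (\<lambda>s. f (a + s * (b - a)))"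
  have "continuous_on {0..1} g" unfolding g_def
  proof (rule continuous_on_compose2[OF cont])
    show "continuous_on {0..1} (\<lambda>s. a + s * (b - a))" by (intro continuous_intros)
    show "(\<lambda>s. a + s * (b - a)) ` {0..1} \<subseteq> {a..b}"
    proof
      fix y assume "y \<in> (\<lambda>s. a + s * (b - a)) ` {0..1}"
      then obtain s where s: "s \<in> {0..1}" "y = a + s * (b - a)" by blast
      have h1: "s * (b - a) \<le> 1 * (b - a)" using s ab by (intro mult_right_mono) auto
      have h2: "0 \<le> s * (b - a)" using s ab by auto
      show "y \<in> {a..b}" using h1 h2 s(2) by simp
    qed
  qed
  from Bernstein_Weierstrass[OF this e] obtain N where
    N: "\<And>m x. N \<le> m \<Longrightarrow> x \<in> {0..1} \<Longrightarrow> \<bar>g x - (\<Sum>k\<le>m. g (real k / real m) * Bernstein m k x)\<bar> < e"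
    by blast
  show ?thesis
  proof (intro exI[of _ N] allI impI ballI)
    fix m x assume m: "N \<le> m" and x: "x \<in> {a..b}"
    define s where "s = (x - a) / (b - a)"
    have s01: "s \<in> {0..1}" unfolding s_def using x ab by (auto simp: field_simps)
    have gs: "g s = f x" unfolding g_def s_def using ab by simp
    have gk: "g (real k / real m) = cf f a b m k" for k unfolding g_def cf_def by (simp add: field_simps)
    have "BD a b m (cf f a b m) 0 x = (\<Sum>k\<le>m. cf f a b m k * Bernstein m k s)"
      unfolding BD_bern[OF ab] s_def ..
    then show "\<bar>f x - BD a b m (cf f a b m) 0 x\<bar> < e"
      using N[OF m s01] unfolding gs gk by simp
  qed
qed

lemma approx_seq:
  assumes cont: "continuous_on {a..b} f" and ab: "a < b"
  obtains ms where "\<And>k. ms k \<ge> N0" "\<And>k x. x \<in> {a..b} \<Longrightarrow> \<bar>f x - BD a b (ms k) (cf f a b (ms k)) 0 x\<bar> \<le> 1 / (real k + 1)"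
proof -
  have "\<forall>k. \<exists>m. m \<ge> N0 \<and> (\<forall>x\<in>{a..b}. \<bar>f x - BD a b m (cf f a b m) 0 x\<bar> \<le> 1 / (real k + 1))"
  proof
    fix k
    obtain N where N: "\<forall>m\<ge>N. \<forall>x\<in>{a..b}. \<bar>f x - BD a b m (cf f a b m) 0 x\<bar> < 1 / (real k + 1)"
      using bern_approx[OF cont ab, of "1 / (real k + 1)"] by auto
    show "\<exists>m. m \<ge> N0 \<and> (\<forall>x\<in>{a..b}. \<bar>f x - BD a b m (cf f a b m) 0 x\<bar> \<le> 1 / (real k + 1))"
      by (intro exI[of _ "max N N0"]) (use N in \<open>fastforce intro: less_imp_le\<close>)
  qed
  then obtain ms where "\<forall>k. ms k \<ge> N0 \<and> (\<forall>x\<in>{a..b}. \<bar>f x - BD a b (ms k) (cf f a b (ms k)) 0 x\<bar> \<le> 1 / (real k + 1))"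
    by metis
  then show ?thesis using that by blast
qed

lemma inv_Suc_tendsto: "(\<lambda>k. 1 / (real k + 1)) \<longlonglongrightarrow> 0"
  using LIMSEQ_inverse_real_of_nat by (simp add: inverse_eq_divide add.commute)

lemma RS_exists:
  assumes cont: "continuous_on {a..b} f" and ab: "a < b" and bv: "bounded_variation_on F a b"
  shows "\<exists>I. has_RS_integral f F a b I"
proof -
  obtain ms where ms: "\<And>k. ms k \<ge> 1" "\<And>k x. x \<in> {a..b} \<Longrightarrow> \<bar>f x - BD a b (ms k) (cf f a b (ms k)) 0 x\<bar> \<le> 1 / (real k + 1)"
    using approx_seq[OF cont ab, of 1] by blast
  define g where "g = (\<lambda>k. BD a b (ms k) (cf f a b (ms k)) 0)"
  have "\<forall>k. \<exists>I. has_RS_integral (g k) F a b I"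
  proof
    fix k
    have "has_RS_integral (g k) F a b (g k b * F b - g k a * F a - integral {a..b} (\<lambda>s. F s * BD a b (ms k) (cf f a b (ms k)) (Suc 0) s))"
      unfolding g_def
      by (rule A2_bv[OF _ bv BD_deriv BD_cont]) (use ab ms(1)[of k] in auto)
    then show "\<exists>I. has_RS_integral (g k) F a b I" by blast
  qed
  then obtain I where I: "\<And>k. has_RS_integral (g k) F a b (I k)" by metis
  have "\<exists>L. has_RS_integral f F a b L \<and> I \<longlonglongrightarrow> L"
    by (rule RS_approx[OF _ bv I _ inv_Suc_tendsto]) (use ab ms(2) in \<open>auto simp: g_def\<close>)
  then show ?thesis by blast
qed

lemma suff:
  assumes ab: "a < b" and n: "n \<ge> 1" and bv: "bounded_variation_on H a b" and Ha: "H a = 0"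
    and Jb: "\<And>k. k \<le> n \<Longrightarrow> J k H a b = 0"
    and pos: "\<And>x. x \<in> {a<..<b} \<Longrightarrow> (-1)^(n+1) * J n H a x \<ge> 0"
    and cont: "continuous_on {a..b} f" and conv: "n_convex_on n {a..b} f"
  shows "\<exists>I. has_RS_integral f H a b I \<and> I \<ge> 0"
proof -
  obtain ms where ms: "\<And>k. ms k \<ge> Suc n" "\<And>k x. x \<in> {a..b} \<Longrightarrow> \<bar>f x - BD a b (ms k) (cf f a b (ms k)) 0 x\<bar> \<le> 1 / (real k + 1)"
    using approx_seq[OF cont ab, of "Suc n"] by blast
  define D where "D = (\<lambda>k. BD a b (ms k) (cf f a b (ms k)))"
  define I where "I = (\<lambda>k. (\<Sum>j\<le>n. (-1)^j * D k j b * J j H a b) + (-1)^(Suc n) * integral {a..b} (\<lambda>s. J n H a s * D k (Suc n) s))"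
  have hI: "has_RS_integral (D k 0) H a b (I k)" for k
    unfolding I_def
  proof (rule IBPn[OF bv _ Ha])
    show "\<And>j x. j \<le> n \<Longrightarrow> (D k j has_real_derivative D k (Suc j) x) (at x)"
      unfolding D_def using ms(1)[of k] ab by (intro BD_deriv) auto
  qed (use ab in \<open>auto simp: D_def BD_cont\<close>)
  have Jn_nonneg: "(-1)^(n+1) * J n H a x \<ge> 0" if x: "x \<in> {a..b}" for x
  proof -
    consider "x = a" | "x = b" | "x \<in> {a<..<b}" using x by fastforce
    then show ?thesis
    proof cases
      case 1
      obtain n' where "n = Suc n'" using n by (cases n) auto
      then show ?thesis using 1 by simp
    next
      case 2 then show ?thesis using Jb[of n] by simp
    qed (use pos in auto)
  qed
  have I_nonneg: "I k \<ge> 0" for k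
  proof -
    have s0: "(\<Sum>j\<le>n. (-1)^j * D k j b * J j H a b) = 0" using Jb by simp
    have bvn: "bounded_variation_on (J n H a) a b" using J_props[OF bv, of n] ab by auto
    have int: "(\<lambda>s. J n H a s * D k (Suc n) s) integrable_on {a..b}"
      by (rule bv_cont_int[OF bvn]) (simp add: D_def BD_cont)
    have "(-1)^(Suc n) * integral {a..b} (\<lambda>s. J n H a s * D k (Suc n) s)
        = integral {a..b} (\<lambda>s. ((-1)^(n+1) * J n H a s) * D k (Suc n) s)"
      by (simp add: mult.assoc)
    also have "\<dots> \<ge> 0"
    proof (rule integral_nonneg)
      show "(\<lambda>s. ((-1)^(n+1) * J n H a s) * D k (Suc n) s) integrable_on {a..b}"
        using integrable_on_mult_right[OF int, of "(-1)^(n+1)"] by (simp add: mult.assoc)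
      fix s assume s: "s \<in> {a..b}"
      have "D k (Suc n) s \<ge> 0" unfolding D_def
        by (rule BD_nonneg[OF conv ab ms(1) _ s]) (simp add: cf_def)
      then show "0 \<le> (-1)^(n+1) * J n H a s * D k (Suc n) s" by (rule mult_nonneg_nonneg[OF Jn_nonneg[OF s]])
    qed
    finally show ?thesis unfolding I_def s0 by simp
  qed
  have "\<exists>L. has_RS_integral f H a b L \<and> I \<longlonglongrightarrow> L"
    by (rule RS_approx[OF _ bv hI _ inv_Suc_tendsto]) (use ab ms(2) in \<open>auto simp: D_def\<close>)
  then obtain L where L: "has_RS_integral f H a b L" "I \<longlonglongrightarrow> L" by blast
  have "L \<ge> 0" using L(2) I_nonneg by (intro LIMSEQ_le_const) auto
  then show ?thesis using L by blast
qed



lemma poly_rolle: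
  fixes Q :: "real poly"
  assumes "a < b" "poly Q a = 0" "poly Q b = 0"
  shows "\<exists>z. a < z \<and> z < b \<and> poly (pderiv Q) z = 0"
  using poly_MVT[OF assms(1), of Q] assms by auto

lemma pderiv_funpow_Suc: "(pderiv^^(Suc k)) Q = (pderiv^^k) (pderiv Q)"
  by (simp add: funpow_Suc_right del: funpow.simps)

lemma gen_rolle:
  fixes Q :: "real poly"
  assumes "finite Z" "card Z = Suc k" "Z \<subseteq> {a..b}" "\<And>z. z \<in> Z \<Longrightarrow> poly Q z = 0"
  shows "\<exists>\<xi>\<in>{a..b}. poly ((pderiv^^k) Q) \<xi> = 0"
  using assms
proof (induction k arbitrary: Q Z)
  case 0
  then have "card Z = 1" by simp
  then obtain z where "Z = {z}" by (rule card_1_singletonE)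
  then show ?case using 0 by auto
next
  case (Suc k)
  define zs where "zs = sorted_list_of_set Z"
  have zs: "sorted_wrt (<) zs" "set zs = Z" "length zs = Suc (Suc k)"
    unfolding zs_def using Suc.prems by auto
  have lt: "zs ! i < zs ! j" if "i < j" "j < Suc (Suc k)" for i j
    using sorted_wrt_nth_less[OF zs(1) that(1)] that zs(3) by auto
  have inZ: "zs ! i \<in> Z" if "i < Suc (Suc k)" for i using zs that by (metis nth_mem)
  have "\<forall>i. \<exists>\<xi>. i < Suc k \<longrightarrow> zs ! i < \<xi> \<and> \<xi> < zs ! Suc i \<and> poly (pderiv Q) \<xi> = 0"
  proof (intro allI impI)
    fix i
    show "\<exists>\<xi>. i < Suc k \<longrightarrow> zs ! i < \<xi> \<and> \<xi> < zs ! Suc i \<and> poly (pderiv Q) \<xi> = 0"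
    proof (cases "i < Suc k")
      case True
      then show ?thesis using poly_rolle[OF lt[of i "Suc i"], of Q] Suc.prems(4) inZ True by auto
    qed auto
  qed
  then obtain \<xi> where xi: "\<And>i. i < Suc k \<Longrightarrow> zs ! i < \<xi> i \<and> \<xi> i < zs ! Suc i \<and> poly (pderiv Q) (\<xi> i) = 0"
    by metis
  define Z' where "Z' = \<xi> ` {..<Suc k}"
  have inj: "inj_on \<xi> {..<Suc k}"
  proof (rule inj_onI)
    fix i j assume ij: "i \<in> {..<Suc k}" "j \<in> {..<Suc k}" "\<xi> i = \<xi> j"
    show "i = j"
    proof (rule ccontr)
      assume "i \<noteq> j"
      then consider "i < j" | "j < i" by linarith
      then show False
      proof cases
        case 1
        have "\<xi> i < zs ! Suc i" using xi[of i] ij(1) by simp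
        also have "zs ! Suc i \<le> zs ! j" using lt[of "Suc i" j] 1 ij by (cases "Suc i = j") auto
        also have "zs ! j < \<xi> j" using xi[of j] ij(2) by simp
        finally show False using ij by simp
      next
        case 2
        have "\<xi> j < zs ! Suc j" using xi[of j] ij(2) by simp
        also have "zs ! Suc j \<le> zs ! i" using lt[of "Suc j" i] 2 ij by (cases "Suc j = i") auto
        also have "zs ! i < \<xi> i" using xi[of i] ij(1) by simp
        finally show False using ij by simp
      qed
    qed
  qed
  have cZ': "card Z' = Suc k" unfolding Z'_def using card_image[OF inj] by simp
  have sub: "Z' \<subseteq> {a..b}"
  proof
    fix y assume "y \<in> Z'"
    then obtain i where i: "i < Suc k" "y = \<xi> i" unfolding Z'_def by auto
    have "zs ! i \<in> {a..b}" "zs ! Suc i \<in> {a..b}" using inZ[of i] inZ[of "Suc i"] i Suc.prems(3) by auto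
    then show "y \<in> {a..b}" using xi[OF i(1)] i by auto
  qed
  have "\<exists>\<xi>\<in>{a..b}. poly ((pderiv^^k) (pderiv Q)) \<xi> = 0"
    by (rule Suc.IH[of Z']) (use cZ' sub xi in \<open>auto simp: Z'_def\<close>)
  then show ?case unfolding pderiv_funpow_Suc .
qed

lemma coeff_pderiv_funpow:
  "coeff ((pderiv^^k) p) n = pochhammer (of_nat (Suc n)) k * coeff p (n + k)"
proof (induction k arbitrary: n)
  case 0 then show ?case by simp
next
  case (Suc k)
  have "coeff ((pderiv^^Suc k) p) n = of_nat (Suc n) * coeff ((pderiv^^k) p) (Suc n)"
    by (simp add: coeff_pderiv)
  also have "\<dots> = of_nat (Suc n) * (pochhammer (of_nat (Suc (Suc n))) k * coeff p (Suc n + k))"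
    using Suc.IH by simp
  also have "\<dots> = pochhammer (of_nat (Suc n)) (Suc k) * coeff p (n + Suc k)"
    by (simp add: pochhammer_rec add_ac mult_ac)
  finally show ?case .
qed

lemma pderiv_funpow_top:
  fixes p :: "real poly"
  assumes "degree p \<le> N"
  shows "(pderiv^^N) p = [:fact N * coeff p N:]"
proof (rule poly_eqI)
  fix n
  show "coeff ((pderiv^^N) p) n = coeff [:fact N * coeff p N:] n"
  proof (cases n)
    case 0 then show ?thesis by (simp add: coeff_pderiv_funpow pochhammer_fact)
  next
    case (Suc n')
    then have "coeff p (n + N) = 0" using assms by (intro coeff_eq_0) auto
    then show ?thesis using Suc by (simp add: coeff_pderiv_funpow)
  qed
qed

lemma pderiv_funpow_diff: "(pderiv^^k) (p - q) = (pderiv^^k) p - (pderiv^^k) (q :: real poly)"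
  by (induction k) (auto simp: pderiv_diff)

lemma poly_dd_mvt:
  fixes P :: "real poly"
  assumes inj: "inj_on x {..N}" and xin: "\<And>i. i \<le> N \<Longrightarrow> x i \<in> {a..b}"
  shows "\<exists>\<xi>\<in>{a..b}. poly ((pderiv^^N) P) \<xi> = fact N * divided_diff N x (poly P)"
proof -
  define w where "w = (\<lambda>i. \<Prod>j\<in>{..N} - {i}. x i - x j)"
  define l where "l = (\<lambda>i. \<Prod>j\<in>{..N} - {i}. [:- x j, 1:])"
  define Lg where "Lg = (\<Sum>i\<le>N. smult (poly P (x i) / w i) (l i))"
  have w0: "w i \<noteq> 0" if "i \<le> N" for i
    unfolding w_def using inj that by (auto simp: inj_on_def)
  have degl: "degree (l i) = N" if "i \<le> N" for i
  proof -
    have "degree (l i) = (\<Sum>j\<in>{..N} - {i}. degree [:- x j, 1:])"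
      unfolding l_def by (rule degree_prod_eq_sum_degree) auto
    also have "\<dots> = N" using that by simp
    finally show ?thesis .
  qed
  have lcl: "coeff (l i) N = 1" if "i \<le> N" for i
  proof -
    have "lead_coeff (l i) = 1" unfolding l_def lead_coeff_prod by simp
    then show ?thesis using degl[OF that] by simp
  qed
  have polyl: "poly (l i) (x k) = (if k = i then w i else 0)" if "i \<le> N" "k \<le> N" for i k
  proof (cases "k = i")
    case True then show ?thesis unfolding l_def w_def by (simp add: poly_prod)
  next
    case False
    then have "k \<in> {..N} - {i}" using that by auto
    then show ?thesis unfolding l_def using False by (simp add: poly_prod prod_zero_iff) blast
  qed
  have polyLg: "poly Lg (x k) = poly P (x k)" if k: "k \<le> N" for k
  proof -
    have "poly Lg (x k) = (\<Sum>i\<le>N. poly P (x i) / w i * poly (l i) (x k))"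
      unfolding Lg_def by (simp add: poly_sum)
    also have "\<dots> = (\<Sum>i\<le>N. if i = k then poly P (x k) else 0)"
      by (intro sum.cong) (use polyl k w0 in auto)
    also have "\<dots> = poly P (x k)" using k by simp
    finally show ?thesis .
  qed
  have degLg: "degree Lg \<le> N" unfolding Lg_def
    by (intro degree_sum_le) (auto intro: order_trans[OF degree_smult_le] simp: degl)
  have cLg: "coeff Lg N = divided_diff N x (poly P)"
  proof -
    have "coeff Lg N = (\<Sum>i\<le>N. poly P (x i) / w i * coeff (l i) N)"
      unfolding Lg_def by (simp add: coeff_sum)
    also have "\<dots> = (\<Sum>i\<le>N. poly P (x i) / w i)" by (intro sum.cong) (auto simp: lcl)
    finally show ?thesis unfolding divided_diff_def w_def .
  qed
  define Q where "Q = P - Lg"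
  have "\<exists>\<xi>\<in>{a..b}. poly ((pderiv^^N) Q) \<xi> = 0"
  proof (rule gen_rolle)
    show "finite (x ` {..N})" by simp
    show "card (x ` {..N}) = Suc N" using card_image[OF inj] by simp
    show "x ` {..N} \<subseteq> {a..b}" using xin by auto
    show "\<And>z. z \<in> x ` {..N} \<Longrightarrow> poly Q z = 0" unfolding Q_def using polyLg by auto
  qed
  then obtain \<xi> where \<xi>: "\<xi> \<in> {a..b}" "poly ((pderiv^^N) Q) \<xi> = 0" by blast
  have "poly ((pderiv^^N) Q) \<xi> = poly ((pderiv^^N) P) \<xi> - fact N * divided_diff N x (poly P)"
    unfolding Q_def pderiv_funpow_diff pderiv_funpow_top[OF degLg] cLg by simp
  then show ?thesis using \<xi> by auto
qed

lemma poly_nconvex: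
  fixes P :: "real poly"
  assumes "\<And>s. s \<in> {a..b} \<Longrightarrow> poly ((pderiv^^(Suc n)) P) s \<ge> 0"
  shows "n_convex_on n {a..b} (poly P)"
  unfolding n_convex_on_def
proof (intro allI impI)
  fix x :: "nat \<Rightarrow> real" assume h: "(\<forall>i\<le>n + 1. x i \<in> {a..b}) \<and> inj_on x {..n + 1}"
  obtain \<xi> where \<xi>: "\<xi> \<in> {a..b}" "poly ((pderiv^^(n+1)) P) \<xi> = fact (n+1) * divided_diff (n+1) x (poly P)"
    using poly_dd_mvt[of x "n+1" a b P] h by auto
  have "poly ((pderiv^^(n+1)) P) \<xi> \<ge> 0" using assms \<xi>(1) by simp
  then show "divided_diff (n + 1) x (poly P) \<ge> 0" using \<xi>(2)
    by (metis fact_gt_zero zero_le_mult_iff not_le)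
qed

definition pint :: "real poly \<Rightarrow> real poly" where
  "pint q = (\<Sum>i\<le>degree q. monom (coeff q i / real (Suc i)) (Suc i))"

lemma pderiv_sum': "pderiv (sum f A) = (\<Sum>i\<in>A. pderiv (f i))"
  by (induction A rule: infinite_finite_induct) (auto simp: pderiv_add)

lemma pderiv_pint: "pderiv (pint q) = q"
proof -
  have "pderiv (pint q) = (\<Sum>i\<le>degree q. monom (coeff q i) i)"
    unfolding pint_def by (simp add: pderiv_sum' pderiv_monom)
  also have "\<dots> = q" by (rule poly_as_sum_of_monoms)
  finally show ?thesis .
qed

lemma pderiv_pint_funpow: "(pderiv^^k) ((pint^^k) q) = q"
proof (induction k)
  case 0 then show ?case by simp
next
  case (Suc k)
  have "(pint^^Suc k) q = pint ((pint^^k) q)" by simp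
  then have "(pderiv^^Suc k) ((pint^^Suc k) q) = (pderiv^^k) (pderiv (pint ((pint^^k) q)))"
    unfolding pderiv_funpow_Suc by simp
  also have "\<dots> = q" unfolding pderiv_pint using Suc.IH .
  finally show ?case .
qed

lemma pderiv_lin_power:
  fixes c :: real
  assumes "k \<le> j"
  shows "(pderiv^^k) ([:c, 1:]^j) = smult (fact j / fact (j - k)) ([:c, 1:]^(j - k))"
  using assms
proof (induction k)
  case 0 then show ?case by simp
next
  case (Suc k)
  then have kj: "k < j" by simp
  define d where "d = j - Suc k"
  have jd: "j - k = Suc d" unfolding d_def using kj by simp
  have "(pderiv^^Suc k) ([:c, 1:]^j) = pderiv (smult (fact j / fact (j - k)) ([:c, 1:]^(j - k)))"
    using Suc by simp
  also have "\<dots> = smult (fact j / fact (j - k) * real (Suc d)) ([:c, 1:]^d)"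
  proof -
    have "pderiv [:c, 1:] = 1" by (simp add: pderiv_pCons)
    then show ?thesis unfolding jd by (simp add: pderiv_smult pderiv_power_Suc del: power_Suc)
  qed
  also have "fact j / fact (j - k) * real (Suc d) = fact j / fact d"
    unfolding jd by (simp add: fact_Suc field_simps del: of_nat_Suc)
  finally show ?case unfolding d_def by simp
qed



lemma bump:
  assumes ab: "a < b" and cK: "continuous_on {a..b} K" and x0: "x0 \<in> {a<..<b}" and neg: "K x0 < 0"
  shows "\<exists>q :: real poly. (\<forall>s\<in>{a..b}. poly q s \<ge> 0) \<and> integral {a..b} (\<lambda>s. K s * poly q s) < 0"
proof -
  define c where "c = - K x0 / 2"
  have c: "c > 0" unfolding c_def using neg by simp
  have x0in: "x0 \<in> {a..b}" using x0 by auto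
  obtain \<delta> where \<delta>: "\<delta> > 0" "\<And>x. x \<in> {a..b} \<Longrightarrow> dist x x0 < \<delta> \<Longrightarrow> dist (K x) (K x0) < c"
    using cK x0in c unfolding continuous_on_iff by metis
  define \<tau> where "\<tau> = (\<lambda>s. max 0 (\<delta> - \<bar>s - x0\<bar>))"
  have ct: "continuous_on {a..b} \<tau>" unfolding \<tau>_def by (intro continuous_intros)
  have t0: "\<tau> s \<ge> 0" for s unfolding \<tau>_def by simp
  have Kt: "K s * \<tau> s \<le> - c * \<tau> s" if s: "s \<in> {a..b}" for s
  proof (cases "\<bar>s - x0\<bar> < \<delta>")
    case True
    then have "dist (K s) (K x0) < c" using \<delta>(2)[OF s] by (simp add: dist_real_def)
    then have "K s \<le> - c" unfolding c_def dist_real_def by linarith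
    then have "K s * \<tau> s \<le> (- c) * \<tau> s" using t0[of s] by (rule mult_right_mono)
    then show ?thesis by simp
  next
    case False
    then have "\<tau> s = 0" unfolding \<tau>_def by simp
    then show ?thesis by simp
  qed
  define T where "T = integral {a..b} \<tau>"
  have T: "T > 0"
  proof -
    have "T \<ge> 0" unfolding T_def using t0 by (intro integral_nonneg integrable_continuous_real ct) auto
    moreover have "T \<noteq> 0"
    proof
      assume "T = 0"
      then have "\<forall>x\<in>{a..b}. \<tau> x = 0" using integral_eq_0_iff[OF ct ab] t0 unfolding T_def by auto
      then have "\<tau> x0 = 0" using x0in by auto
      then show False using \<delta>(1) unfolding \<tau>_def by simp
    qed
    ultimately show ?thesis by simp
  qed
  obtain M0 where M0: "\<And>x. x \<in> {a..b} \<Longrightarrow> \<bar>K x\<bar> \<le> M0"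
    using compact_imp_bounded[OF compact_continuous_image[OF cK compact_Icc]]
    unfolding bounded_iff by (metis image_eqI real_norm_def)
  define M where "M = max M0 0"
  have M: "\<And>x. x \<in> {a..b} \<Longrightarrow> \<bar>K x\<bar> \<le> M" "M \<ge> 0" using M0 unfolding M_def by (auto intro: max.coboundedI1)
  define e where "e = c * T / (4 * (M + 1) * (b - a + 1))"
  have e: "e > 0" unfolding e_def using c T M ab by auto
  obtain g where g: "real_polynomial_function g" "\<And>x. x \<in> {a..b} \<Longrightarrow> \<bar>\<tau> x - g x\<bar> < e"
    using Stone_Weierstrass_real_polynomial_function[OF compact_Icc ct e] by blast
  obtain co n where gco: "g = (\<lambda>x. \<Sum>i\<le>n. co i * x^i)" using g(1) real_polynomial_function_iff_sum by blast
  define q where "q = (\<Sum>i\<le>n. monom (co i) i) + [:e:]"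
  have pq: "poly q x = g x + e" for x unfolding q_def gco by (simp add: poly_sum poly_monom)
  have qpos: "poly q s \<ge> \<tau> s" if "s \<in> {a..b}" for s using g(2)[OF that] pq[of s] by linarith
  have qd: "\<bar>poly q s - \<tau> s\<bar> \<le> 2 * e" if "s \<in> {a..b}" for s using g(2)[OF that] pq[of s] by linarith
  have cq: "continuous_on {a..b} (poly q)" by (intro continuous_intros)
  have i1: "(\<lambda>s. K s * \<tau> s) integrable_on {a..b}" by (intro integrable_continuous_real continuous_intros cK ct)
  have i2: "(\<lambda>s. K s * (poly q s - \<tau> s)) integrable_on {a..b}"
    by (intro integrable_continuous_real continuous_intros cK ct)
  have E1: "integral {a..b} (\<lambda>s. K s * poly q s) = integral {a..b} (\<lambda>s. K s * \<tau> s + K s * (poly q s - \<tau> s))"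
    by (simp add: algebra_simps)
  have E2: "integral {a..b} (\<lambda>s. K s * \<tau> s + K s * (poly q s - \<tau> s)) = integral {a..b} (\<lambda>s. K s * \<tau> s) + integral {a..b} (\<lambda>s. K s * (poly q s - \<tau> s))"
    by (rule integral_add[OF i1 i2])
  have E3: "integral {a..b} (\<lambda>s. K s * \<tau> s) \<le> integral {a..b} (\<lambda>s. - c * \<tau> s)"
  proof (rule integral_le[OF i1])
    show "(\<lambda>s. - c * \<tau> s) integrable_on {a..b}" by (intro integrable_continuous_real continuous_intros ct)
    show "\<And>x. x \<in> {a..b} \<Longrightarrow> K x * \<tau> x \<le> - c * \<tau> x" by (rule Kt)
  qed
  have E4: "integral {a..b} (\<lambda>s. - c * \<tau> s) = - c * T" unfolding T_def by simp
  have E5: "integral {a..b} (\<lambda>s. K s * (poly q s - \<tau> s)) \<le> (M * (2 * e)) * (b - a)"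
  proof -
    have "norm (integral {a..b} (\<lambda>s. K s * (poly q s - \<tau> s))) \<le> (M * (2 * e)) * (b - a)"
    proof (rule integral_bound)
      show "a \<le> b" using ab by simp
      show "continuous_on {a..b} (\<lambda>s. K s * (poly q s - \<tau> s))" by (intro continuous_intros cK ct)
      fix s assume s: "s \<in> {a..b}"
      have "\<bar>K s\<bar> * \<bar>poly q s - \<tau> s\<bar> \<le> M * (2 * e)" using M qd s by (intro mult_mono) auto
      then show "norm (K s * (poly q s - \<tau> s)) \<le> M * (2 * e)" by (simp add: abs_mult)
    qed
    then show ?thesis by simp
  qed
  have E6: "- c * T + M * (2 * e) * (b - a) < 0"
  proof -
    have "M * (2 * e) * (b - a) = c * T * (2 * M * (b - a)) / (4 * (M + 1) * (b - a + 1))"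
      unfolding e_def by (simp add: field_simps)
    also have "\<dots> < c * T * (4 * (M + 1) * (b - a + 1)) / (4 * (M + 1) * (b - a + 1))"
    proof (intro divide_strict_right_mono mult_strict_left_mono)
      show "2 * M * (b - a) < 4 * (M + 1) * (b - a + 1)" using M(2) ab
      proof -
        have "2 * M * (b - a) \<le> 2 * (M + 1) * (b - a + 1)" using M(2) ab by (intro mult_mono) auto
        also have "\<dots> < 4 * (M + 1) * (b - a + 1)" using M(2) ab by (intro mult_strict_right_mono) auto
        finally show ?thesis .
      qed
    qed (use c T M ab in auto)
    also have "\<dots> = c * T" using M(2) ab by simp
    finally show ?thesis by simp
  qed
  have "integral {a..b} (\<lambda>s. K s * poly q s) < 0" using E1 E2 E3 E4 E5 E6 by linarith
  moreover have "\<forall>s\<in>{a..b}. poly q s \<ge> 0" using qpos t0 by (meson order_trans)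
  ultimately show ?thesis by blast
qed



lemma has_RS_uminus:
  assumes "has_RS_integral f F a b I"
  shows "has_RS_integral (\<lambda>x. - f x) F a b (- I)"
  unfolding has_RS_iff
proof (intro allI impI)
  fix e :: real assume e: "e > 0"
  obtain d where d: "d > 0" "\<forall>m x t. tp a b d m x t \<longrightarrow> \<bar>RSsum f F m x t - I\<bar> < e"
    using assms e unfolding has_RS_iff by blast
  show "\<exists>d>0. \<forall>m x t. tp a b d m x t \<longrightarrow> \<bar>RSsum (\<lambda>x. - f x) F m x t - - I\<bar> < e"
  proof (intro exI[of _ d] conjI allI impI)
    fix m x t assume p: "tp a b d m x t"
    have "RSsum (\<lambda>x. - f x) F m x t = - RSsum f F m x t"
      unfolding RSsum_def by (simp add: sum_negf)
    then show "\<bar>RSsum (\<lambda>x. - f x) F m x t - - I\<bar> < e" using d p by (simp add: abs_minus_commute)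
  qed (use d in auto)
qed

lemma J0_fun: "J 0 G a = G" by (rule ext) simp

lemma poly_IBP:
  fixes P :: "real poly"
  assumes bv: "bounded_variation_on H a b" and ab: "a \<le> b" and Ha: "H a = 0"
  shows "has_RS_integral (poly P) H a b
     ((\<Sum>k\<le>r. (-1)^k * poly ((pderiv^^k) P) b * J k H a b)
       + (-1)^(Suc r) * integral {a..b} (\<lambda>s. J r H a s * poly ((pderiv^^(Suc r)) P) s))"
proof -
  have "has_RS_integral ((\<lambda>k. poly ((pderiv^^k) P)) 0) H a b
     ((\<Sum>k\<le>r. (-1)^k * (\<lambda>k. poly ((pderiv^^k) P)) k b * J k H a b)
       + (-1)^(Suc r) * integral {a..b} (\<lambda>s. J r H a s * (\<lambda>k. poly ((pderiv^^k) P)) (Suc r) s))"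
  proof (rule IBPn[OF bv ab Ha])
    show "\<And>k x. k \<le> r \<Longrightarrow> (poly ((pderiv^^k) P) has_real_derivative poly ((pderiv^^(Suc k)) P) x) (at x)"
      by simp
    show "continuous_on {a..b} (poly ((pderiv^^(Suc r)) P))"
      by (rule deriv_cont[OF poly_DERIV])
  qed
  then show ?thesis by simp
qed

lemma deg_lin_power: "degree ([:c, 1:]^j :: real poly) = j"
  by (simp add: degree_power_eq)

lemma top_zero:
  fixes P :: "real poly"
  assumes "degree P < N"
  shows "(pderiv^^N) P = 0"
proof -
  have "coeff P N = 0" using assms by (intro coeff_eq_0) auto
  then show ?thesis using pderiv_funpow_top[of P N] assms by simp
qed

theorem theorem2p1:
  fixes a b :: real and n :: nat and F1 F2 :: "real \<Rightarrow> real"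
  assumes "a < b" and "n \<ge> 1"
    and "bounded_variation_on F1 a b" and "bounded_variation_on F2 a b"
    and "F1 a = F2 a"
  shows "(\<forall>f. continuous_on {a..b} f \<and> n_convex_on n {a..b} f \<longrightarrow>
            RS_integral f F1 a b \<le> RS_integral f F2 a b)
     \<longleftrightarrow> (F1 b = F2 b
         \<and> integral {a..b} F1 = integral {a..b} F2
         \<and> (\<forall>k\<in>{2..n}. J k F1 a b = J k F2 a b)
         \<and> (\<forall>x\<in>{a<..<b}. (-1) ^ (n+1) * J n F1 a x \<le> (-1) ^ (n+1) * J n F2 a x))"
proof -
  note ab0 = assms(1) and n1 = assms(2) and bv1 = assms(3) and bv2 = assms(4) and Fa = assms(5)
  have ab: "a \<le> b" using ab0 by simp
  define H where "H = (\<lambda>x. F2 x - F1 x)"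
  have bvH: "bounded_variation_on H a b" unfolding H_def by (rule bv_diff[OF bv2 bv1])
  have Ha: "H a = 0" unfolding H_def using Fa by simp
  have JH: "J k H a x = J k F2 a x - J k F1 a x" if "x \<in> {a..b}" for k x
    unfolding H_def by (rule J_diff[OF bv1 bv2 ab that])
  have ex: "has_RS_integral f H a b (RS_integral f F2 a b - RS_integral f F1 a b)"
    if cf: "continuous_on {a..b} f" for f
  proof -
    obtain I1 where I1: "has_RS_integral f F1 a b I1" using RS_exists[OF cf ab0 bv1] by blast
    obtain I2 where I2: "has_RS_integral f F2 a b I2" using RS_exists[OF cf ab0 bv2] by blast
    have "has_RS_integral f H a b (I2 - I1)" unfolding H_def by (rule has_RS_diff[OF I2 I1])
    then show ?thesis using RS_integral_eq[OF ab I1] RS_integral_eq[OF ab I2] by simp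
  qed
  have bin: "b \<in> {a..b}" using ab by simp
  show ?thesis
  proof
    assume A: "\<forall>f. continuous_on {a..b} f \<and> n_convex_on n {a..b} f \<longrightarrow>
            RS_integral f F1 a b \<le> RS_integral f F2 a b"
    have cpoly: "continuous_on {a..b} (poly P)" for P :: "real poly" by (rule deriv_cont[OF poly_DERIV])
    have polyA: "RS_integral (poly P) F1 a b \<le> RS_integral (poly P) F2 a b"
      if "\<And>s. s \<in> {a..b} \<Longrightarrow> poly ((pderiv^^(Suc n)) P) s \<ge> 0" for P :: "real poly"
      using A poly_nconvex[OF that] cpoly by blast
    have Jb: "J j H a b = 0" if j: "j \<le> n" for j
    proof -
      define P :: "real poly" where "P = [:-b, 1:]^j"
      have degP: "degree P = j" unfolding P_def by (rule deg_lin_power)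
      have z1: "(pderiv^^(Suc n)) P = 0" by (rule top_zero) (use degP j in auto)
      have mneg: "(pderiv^^k) (-P) = - (pderiv^^k) P" for k by (induction k) (simp_all add: pderiv_minus)
      have z2: "(pderiv^^(Suc n)) (-P) = 0" using z1 unfolding mneg by simp
      have r1: "RS_integral (poly P) F1 a b \<le> RS_integral (poly P) F2 a b" by (rule polyA) (use z1 in simp)
      have r2: "RS_integral (poly (-P)) F1 a b \<le> RS_integral (poly (-P)) F2 a b" by (rule polyA) (use z2 in simp)
      have neg: "RS_integral (poly (-P)) F a b = - RS_integral (poly P) F a b"
        if bvF: "bounded_variation_on F a b" for F
      proof -
        obtain I where I: "has_RS_integral (poly P) F a b I" using RS_exists[OF cpoly ab0 bvF] by blast
        have pe: "poly (-P) = (\<lambda>x. - poly P x)" by (rule ext) simp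
        have "has_RS_integral (poly (-P)) F a b (- I)" unfolding pe by (rule has_RS_uminus[OF I])
        then show ?thesis using RS_integral_eq[OF ab] I by simp
      qed
      have d0: "RS_integral (poly P) F2 a b - RS_integral (poly P) F1 a b = 0"
        using r1 r2 neg[OF bv1] neg[OF bv2] by simp
      have h1: "has_RS_integral (poly P) H a b 0" using ex[OF cpoly[of P]] d0 by simp
      have h2: "has_RS_integral (poly P) H a b
         ((\<Sum>k\<le>j. (-1)^k * poly ((pderiv^^k) P) b * J k H a b)
           + (-1)^(Suc j) * integral {a..b} (\<lambda>s. J j H a s * poly ((pderiv^^(Suc j)) P) s))"
        by (rule poly_IBP[OF bvH ab Ha])
      have z3: "(pderiv^^(Suc j)) P = 0" by (rule top_zero) (use degP in auto)
      have Dk: "poly ((pderiv^^k) P) b = (if k = j then fact j else 0)" if k: "k \<le> j" for k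
        unfolding P_def pderiv_lin_power[OF k] using k by auto
      have "(\<Sum>k\<le>j. (-1)^k * poly ((pderiv^^k) P) b * J k H a b) = (\<Sum>k\<le>j. if k = j then (-1)^j * fact j * J j H a b else 0)"
        by (intro sum.cong) (auto simp: Dk)
      also have "\<dots> = (-1)^j * fact j * J j H a b" by simp
      finally have "0 = (-1)^j * fact j * J j H a b"
        using has_RS_unique[OF ab h1 h2] z3 by simp
      then show ?thesis by simp
    qed
    have c1: "F1 b = F2 b" using Jb[of 0] JH[OF bin, of 0] by simp
    have c2: "integral {a..b} F1 = integral {a..b} F2"
      using Jb[of 1] JH[OF bin, of 1] n1 by (simp add: J0_fun)
    have c3: "\<forall>k\<in>{2..n}. J k F1 a b = J k F2 a b" using Jb JH[OF bin] by auto
    have c4: "\<forall>x\<in>{a<..<b}. (-1) ^ (n+1) * J n F1 a x \<le> (-1) ^ (n+1) * J n F2 a x"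
    proof (rule ccontr)
      assume "\<not> ?thesis"
      then obtain x0 where x0: "x0 \<in> {a<..<b}" "(-1) ^ (n+1) * J n F1 a x0 > (-1) ^ (n+1) * J n F2 a x0"
        by (auto simp: not_le)
      define K where "K = (\<lambda>s. (-1) ^ (n+1) * J n H a s)"
      have "J n H a x0 = J n F2 a x0 - J n F1 a x0" using JH[of x0 n] x0 by auto
      then have "K x0 = (-1) ^ (n+1) * J n F2 a x0 - (-1) ^ (n+1) * J n F1 a x0"
        unfolding K_def by (simp only: right_diff_distrib)
      then have Kx0: "K x0 < 0" using x0(2) by linarith
      obtain n' where n': "n = Suc n'" using n1 by (cases n) auto
      have cK: "continuous_on {a..b} K" unfolding K_def n'
        by (intro continuous_intros J_cont[OF bvH ab])
      obtain q where q: "\<forall>s\<in>{a..b}. poly q s \<ge> 0" "integral {a..b} (\<lambda>s. K s * poly q s) < 0"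
        using bump[OF ab0 cK x0(1) Kx0] by blast
      define P where "P = (pint^^(Suc n)) q"
      have dP: "(pderiv^^(Suc n)) P = q" unfolding P_def by (rule pderiv_pint_funpow)
      have r1: "RS_integral (poly P) F1 a b \<le> RS_integral (poly P) F2 a b" by (rule polyA) (use q dP in auto)
      have h1: "has_RS_integral (poly P) H a b (RS_integral (poly P) F2 a b - RS_integral (poly P) F1 a b)"
        using ex[OF cpoly] .
      have h2: "has_RS_integral (poly P) H a b
         ((\<Sum>k\<le>n. (-1)^k * poly ((pderiv^^k) P) b * J k H a b)
           + (-1)^(Suc n) * integral {a..b} (\<lambda>s. J n H a s * poly ((pderiv^^(Suc n)) P) s))"
        by (rule poly_IBP[OF bvH ab Ha])
      have s0: "(\<Sum>k\<le>n. (-1)^k * poly ((pderiv^^k) P) b * J k H a b) = 0" using Jb by simp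
      have "(-1)^(Suc n) * integral {a..b} (\<lambda>s. J n H a s * poly ((pderiv^^(Suc n)) P) s)
          = integral {a..b} (\<lambda>s. K s * poly q s)"
        unfolding dP K_def by (simp add: mult.assoc)
      then have "RS_integral (poly P) F2 a b - RS_integral (poly P) F1 a b = integral {a..b} (\<lambda>s. K s * poly q s)"
        using has_RS_unique[OF ab h1 h2] s0 by simp
      then show False using r1 q(2) by simp
    qed
    show "F1 b = F2 b \<and> integral {a..b} F1 = integral {a..b} F2
         \<and> (\<forall>k\<in>{2..n}. J k F1 a b = J k F2 a b)
         \<and> (\<forall>x\<in>{a<..<b}. (-1) ^ (n+1) * J n F1 a x \<le> (-1) ^ (n+1) * J n F2 a x)"
      using c1 c2 c3 c4 by blast
  next
    assume B: "F1 b = F2 b \<and> integral {a..b} F1 = integral {a..b} F2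
         \<and> (\<forall>k\<in>{2..n}. J k F1 a b = J k F2 a b)
         \<and> (\<forall>x\<in>{a<..<b}. (-1) ^ (n+1) * J n F1 a x \<le> (-1) ^ (n+1) * J n F2 a x)"
    have Jb: "J k H a b = 0" if k: "k \<le> n" for k
    proof -
      consider "k = 0" | "k = 1" | "k \<in> {2..n}" using k by fastforce
      then have "J k F2 a b = J k F1 a b"
      proof cases
        case 1 then show ?thesis using B by simp
      next
        case 2 then show ?thesis using B by (simp add: J0_fun)
      next
        case 3 then show ?thesis using B by simp
      qed
      then show ?thesis using JH[OF bin, of k] by simp
    qed
    have pos: "(-1)^(n+1) * J n H a x \<ge> 0" if x: "x \<in> {a<..<b}" for x
    proof -
      have "(-1) ^ (n+1) * J n F1 a x \<le> (-1) ^ (n+1) * J n F2 a x" using B x by blast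
      moreover have "J n H a x = J n F2 a x - J n F1 a x" using JH x by auto
      ultimately show ?thesis by (simp add: right_diff_distrib)
    qed
    show "\<forall>f. continuous_on {a..b} f \<and> n_convex_on n {a..b} f \<longrightarrow>
            RS_integral f F1 a b \<le> RS_integral f F2 a b"
    proof (intro allI impI)
      fix f assume f: "continuous_on {a..b} f \<and> n_convex_on n {a..b} f"
      obtain I where I: "has_RS_integral f H a b I" "I \<ge> 0"
        using suff[OF ab0 n1 bvH Ha Jb pos] f by blast
      have "I = RS_integral f F2 a b - RS_integral f F1 a b"
        using has_RS_unique[OF ab I(1) ex] f by blast
      then show "RS_integral f F1 a b \<le> RS_integral f F2 a b" using I(2) by simp
    qed
  qed
qed


end
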